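(* For every integer $n\ge5$, let $\Delta^3_n$ be the pure $3$-dimensional simplicial complex on the vertex set $\{\pm1,\dots,\pm n\}$ whose facets are the following four-element sets together with their antipodal images (images under $x\mapsto -x$): (a) $\{i,i+1,n-1,n\}$ and $\{-i,-i-1,n-1,n\}$ for $1\le i\le n-3$; (b) $\{1,-(n-2),n-1,n\}$, $\{1,-(n-2),-(n-1),n\}$, $\{1,-(n-2),-(n-1),-n\}$; (c) $\{i,i+1,\ell-2,\ell\}$ and $\{-i,-i-1,\ell-2,\ell\}$ for $5\le \ell\le n$ and $1\le i\le \ell-4$; (d) $\{1,-(\ell-3),\ell-2,\ell\}$, $\{1,-(\ell-3),-(\ell-1),\ell\}$, $\{-(\ell-3),-(\ell-2),-(\ell-1),\ell\}$ for $5\le\ell\le n$; (e) $\{1,2,-3,4\}$, $\{1,2,3,-4\}$, $\{1,-2,3,-4\}$. Then $\Delta^3_n$ (a centrally symmetric simplicial $3$-sphere) is not polytopal: there is no simplicial convex $4$-polytope whose boundary complex is combinatorially isomorphic to $\Delta^3_n$.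
   Context: $\{\Delta^3_n\}$ is Jockusch's family of centrally symmetric cs-$2$-neighborly simplicial $3$-spheres on $2n$ vertices, in the explicit facet description of Novik and Zheng (the facets in (a),(b) form the ball $B^{3,1}_n$). A simplicial $(d-1)$-sphere is polytopal if it is isomorphic to the boundary complex of a simplicial convex $d$-polytope; here $d=4$. *)

theory Defs
  imports "HOL-Analysis.Analysis"
begin

definition jockusch_base_facets :: "int \<Rightarrow> int set set" where
  "jockusch_base_facets n =
     {{i, i+1, n-1, n} | i. 1 \<le> i \<and> i \<le> n-3}
   \<union> {{-i, -i-1, n-1, n} | i. 1 \<le> i \<and> i \<le> n-3}
   \<union> {{1, -(n-2), n-1, n}, {1, -(n-2), -(n-1), n}, {1, -(n-2), -(n-1), -n}}
   \<union> {{i, i+1, l-2, l} | i l. 5 \<le> l \<and> l \<le> n \<and> 1 \<le> i \<and> i \<le> l-4}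
   \<union> {{-i, -i-1, l-2, l} | i l. 5 \<le> l \<and> l \<le> n \<and> 1 \<le> i \<and> i \<le> l-4}
   \<union> (\<Union>l\<in>{5..n}. {{1, -(l-3), l-2, l}, {1, -(l-3), -(l-1), l}, {-(l-3), -(l-2), -(l-1), l}})
   \<union> {{1, 2, -3, 4}, {1, 2, 3, -4}, {1, -2, 3, -4}}"

definition jockusch_facets :: "int \<Rightarrow> int set set" where
  "jockusch_facets n = jockusch_base_facets n \<union> (\<lambda>F. uminus ` F) ` jockusch_base_facets n"

definition jockusch_vertices :: "int \<Rightarrow> int set" where
  "jockusch_vertices n = {x. x \<noteq> 0 \<and> \<bar>x\<bar> \<le> n}"

definition jockusch_faces :: "int \<Rightarrow> int set set" where
  "jockusch_faces n = {S. \<exists>F\<in>jockusch_facets n. S \<subseteq> F}"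

text \<open>Vertices of a polytope and its boundary complex, recorded as the vertex sets
  of its proper faces (the empty face included).\<close>
definition poly_vertices :: "'a::euclidean_space set \<Rightarrow> 'a set" where
  "poly_vertices P = {v. v extreme_point_of P}"

definition boundary_complex :: "'a::euclidean_space set \<Rightarrow> 'a set set" where
  "boundary_complex P = {poly_vertices F | F. F face_of P \<and> F \<noteq> P}"

definition simplicial_polytope :: "int \<Rightarrow> 'a::euclidean_space set \<Rightarrow> bool" where
  "simplicial_polytope d P \<longleftrightarrow> polytope P \<and> aff_dim P = d \<and>
     (\<forall>F. F face_of P \<and> F \<noteq> P \<longrightarrow> (\<exists>m. m simplex F))"

definition polytopal4 :: "'v set \<Rightarrow> 'v set set \<Rightarrow> bool" where
  "polytopal4 V K \<longleftrightarrow> (\<exists>(P :: (real^4) set) f.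
     simplicial_polytope 4 P \<and> bij_betw f V (poly_vertices P) \<and>
     (\<forall>S. S \<subseteq> V \<longrightarrow> (S \<in> K \<longleftrightarrow> f ` S \<in> boundary_complex P)))"

end

theory Submission
  imports Defs
begin


definition d4v :: "real^4 \<Rightarrow> real^4 \<Rightarrow> real^4 \<Rightarrow> real^4 \<Rightarrow> real" where
"d4v a b c e =
  (a$1*b$2-a$2*b$1)*(c$3*e$4-c$4*e$3) - (a$1*b$3-a$3*b$1)*(c$2*e$4-c$4*e$2) + (a$1*b$4-a$4*b$1)*(c$2*e$3-c$3*e$2)
 + (a$2*b$3-a$3*b$2)*(c$1*e$4-c$4*e$1) - (a$2*b$4-a$4*b$2)*(c$1*e$3-c$3*e$1) + (a$3*b$4-a$4*b$3)*(c$1*e$2-c$2*e$1)"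

lemma det_4:
  "det (A::real^4^4) = d4v (A$1) (A$2) (A$3) (A$4)"
proof -
  have f1: "finite {2::4, 3, 4}" "1 \<notin> {2::4, 3, 4}" by auto
  have f2: "finite {3::4, 4}" "2 \<notin> {3::4, 4}" by auto
  have f3: "finite {4::4}" "3 \<notin> {4::4}" by auto
  show ?thesis
    unfolding det_def UNIV_4
    unfolding sum_over_permutations_insert[OF f1]
    unfolding sum_over_permutations_insert[OF f2]
    unfolding sum_over_permutations_insert[OF f3]
    unfolding permutes_sing
    by (simp add: sign_swap_id permutation_swap_id permutation_compose sign_compose sign_id swap_id_eq d4v_def algebra_simps)
qed

lemma d4v_zero_dep:
  assumes "d4v u v w z = 0"
  shows "\<exists>c1 c2 c3 c4. (c1 \<noteq> 0 \<or> c2 \<noteq> 0 \<or> c3 \<noteq> 0 \<or> c4 \<noteq> 0) \<and>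
          c1 *\<^sub>R u + c2 *\<^sub>R v + c3 *\<^sub>R w + c4 *\<^sub>R z = 0"
proof -
  define M :: "real^4^4" where "M = (\<chi> i. if i = 1 then u else if i = 2 then v else if i = 3 then w else z)"
  have "det M = 0" using assms by (simp add: det_4 M_def)
  then have "det (transpose M) = 0" by simp
  then have "\<not> invertible (transpose M)" by (simp add: invertible_det_nz)
  then obtain x where x: "transpose M *v x = 0" "x \<noteq> 0"
    by (metis invertible_left_inverse matrix_left_invertible_ker)
  have "x$1 *\<^sub>R u + x$2 *\<^sub>R v + x$3 *\<^sub>R w + x$4 *\<^sub>R z = 0"
    using x(1) by (simp add: vec_eq_iff matrix_vector_mult_def transpose_def sum_4 M_def algebra_simps)
  moreover have "x$1 \<noteq> 0 \<or> x$2 \<noteq> 0 \<or> x$3 \<noteq> 0 \<or> x$4 \<noteq> 0"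
    using x(2) by (simp add: vec_eq_iff forall_4)
  ultimately show ?thesis by blast
qed


lemma d4v_lin: "d4v a b c (r *\<^sub>R x + s *\<^sub>R y) = r * d4v a b c x + s * d4v a b c y"
  unfolding d4v_def by simp algebra
definition br :: "real^4 \<Rightarrow> real^4 \<Rightarrow> real^4 \<Rightarrow> real^4 \<Rightarrow> real^4 \<Rightarrow> real" where
  "br p1 p2 p3 p4 x = d4v (p2 - p1) (p3 - p1) (p4 - p1) (x - p1)"
lemma br_affine:
  "br p1 p2 p3 p4 ((1 - t) *\<^sub>R x + t *\<^sub>R y) = (1 - t) * br p1 p2 p3 p4 x + t * br p1 p2 p3 p4 y"
proof -
  have "(1 - t) *\<^sub>R x + t *\<^sub>R y - p1 = (1 - t) *\<^sub>R (x - p1) + t *\<^sub>R (y - p1)"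
    by (simp add: algebra_simps)
  then show ?thesis unfolding br_def by (simp add: d4v_lin)
qed
lemma l26: fixes a :: "real^4" assumes "a \<bullet> (c1 *\<^sub>R (p2 - p1) + c2 *\<^sub>R (p3 - p1) + c3 *\<^sub>R (p4 - p1) + c4 *\<^sub>R (x - p1)) = 0"
 "a \<bullet> p1 = b" "a \<bullet> p2 = b" "a \<bullet> p3 = b" "a \<bullet> p4 = b"
 shows "c4 * (a \<bullet> x - b) = 0"
  using assms by (simp add: inner_add_right inner_diff_right right_diff_distrib)
lemma l37: fixes p1 :: "real^4" assumes e: "c1 *\<^sub>R (p2 - p1) + c2 *\<^sub>R (p3 - p1) + c3 *\<^sub>R (p4 - p1) + c4 *\<^sub>R (x - p1) = 0" and c4: "c4 = 0"
  shows "(- (c1 + c2 + c3)) *\<^sub>R p1 + (c1 *\<^sub>R p2 + (c2 *\<^sub>R p3 + c3 *\<^sub>R p4)) = 0"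
proof -
  have "(- (c1 + c2 + c3)) *\<^sub>R p1 + (c1 *\<^sub>R p2 + (c2 *\<^sub>R p3 + c3 *\<^sub>R p4)) = c1 *\<^sub>R (p2 - p1) + c2 *\<^sub>R (p3 - p1) + c3 *\<^sub>R (p4 - p1) + c4 *\<^sub>R (x - p1)"
    using c4 by (simp add: scaleR_diff_right scaleR_add_left scaleR_diff_left algebra_simps)
  with e show ?thesis by simp
qed

lemma br_nonzero:
  assumes ind: "\<not> affine_dependent {p1,p2,p3,p4}"
    and dist: "distinct [p1,p2,p3,p4]"
    and h: "a \<bullet> p1 = b" "a \<bullet> p2 = b" "a \<bullet> p3 = b" "a \<bullet> p4 = b" "a \<bullet> x < b"
  shows "br p1 p2 p3 p4 x \<noteq> 0"
proof
  assume "br p1 p2 p3 p4 x = 0"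
  then have "d4v (p2 - p1) (p3 - p1) (p4 - p1) (x - p1) = 0" unfolding br_def .
  from d4v_zero_dep[OF this] obtain c1 c2 c3 c4 where c: "c1 \<noteq> 0 \<or> c2 \<noteq> 0 \<or> c3 \<noteq> 0 \<or> c4 \<noteq> 0"
    and e: "c1 *\<^sub>R (p2 - p1) + c2 *\<^sub>R (p3 - p1) + c3 *\<^sub>R (p4 - p1) + c4 *\<^sub>R (x - p1) = 0"
    by blast
  have "a \<bullet> (c1 *\<^sub>R (p2 - p1) + c2 *\<^sub>R (p3 - p1) + c3 *\<^sub>R (p4 - p1) + c4 *\<^sub>R (x - p1)) = 0"
    using e by simp
  from l26[OF this h(1-4)] have "c4 * (a \<bullet> x - b) = 0" .
  then have c4: "c4 = 0" using h(5) by simp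
  have d: "p1 \<noteq> p2" "p1 \<noteq> p3" "p1 \<noteq> p4" "p2 \<noteq> p3" "p2 \<noteq> p4" "p3 \<noteq> p4"
     "p2 \<noteq> p1" "p3 \<noteq> p1" "p4 \<noteq> p1" "p3 \<noteq> p2" "p4 \<noteq> p2" "p4 \<noteq> p3" using dist by auto
  define u where "u = (\<lambda>y. if y = p1 then - (c1 + c2 + c3) else if y = p2 then c1 else if y = p3 then c2 else c3)"
  have "affine_dependent {p1,p2,p3,p4}"
    unfolding affine_dependent_explicit
  proof (intro exI conjI)
    show "finite {p1,p2,p3,p4}" by simp
    show "{p1,p2,p3,p4} \<subseteq> {p1,p2,p3,p4}" by simp
    show "sum u {p1,p2,p3,p4} = 0" by (simp add: u_def d)
    show "\<exists>v\<in>{p1,p2,p3,p4}. u v \<noteq> 0" using c c4 by (auto simp: u_def d)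
    show "(\<Sum>v\<in>{p1,p2,p3,p4}. u v *\<^sub>R v) = 0"
      using l37[OF e c4] by (simp add: u_def d)
  qed
  with ind show False by simp
qed

lemma t01: fixes X Y :: real assumes "X*Y < 0" shows "0 \<le> X/(X-Y) \<and> X/(X-Y) \<le> 1"
proof (cases "X > 0")
  case True then have "Y < 0" using assms by (simp add: mult_less_0_iff)
  with True show ?thesis by (simp add: divide_simps)
next
  case False then have "X < 0" "Y > 0" using assms by (auto simp add: mult_less_0_iff)
  then show ?thesis by (simp add: divide_simps)
qed
lemma tzero: fixes X Y :: real assumes "X*Y < 0" shows "(1 - X/(X-Y))*X + X/(X-Y)*Y = 0"
proof -
  have "X - Y \<noteq> 0" using assms by auto
  then show ?thesis by (simp add: field_simps)
qed
lemma opp: fixes X Y :: real assumes "\<not> X*Y > 0" "X \<noteq> 0" "Y \<noteq> 0" shows "X*Y < 0"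
proof -
  have "X*Y \<noteq> 0" using assms by simp
  then show ?thesis using assms(1) by linarith
qed

lemma br_same_sign:
  assumes ind: "\<not> affine_dependent {p1,p2,p3,p4}"
    and dist: "distinct [p1,p2,p3,p4]"
    and h: "a \<bullet> p1 = b" "a \<bullet> p2 = b" "a \<bullet> p3 = b" "a \<bullet> p4 = b" "a \<bullet> x < b" "a \<bullet> y < b"
  shows "br p1 p2 p3 p4 x * br p1 p2 p3 p4 y > 0"
proof (rule ccontr)
  define X where "X = br p1 p2 p3 p4 x"
  define Y where "Y = br p1 p2 p3 p4 y"
  assume "\<not> br p1 p2 p3 p4 x * br p1 p2 p3 p4 y > 0"
  then have n: "\<not> X * Y > 0" by (simp add: X_def Y_def)
  have "X \<noteq> 0" using br_nonzero[OF ind dist h(1-5)] by (simp add: X_def)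
  moreover have "Y \<noteq> 0" using br_nonzero[OF ind dist h(1-4) h(6)] by (simp add: Y_def)
  ultimately have o: "X * Y < 0" using opp n by blast
  define t where "t = X / (X - Y)"
  have t01: "0 \<le> t" "t \<le> 1" using t01[OF o] unfolding t_def by auto
  have "br p1 p2 p3 p4 ((1 - t) *\<^sub>R x + t *\<^sub>R y) = (1 - t) * X + t * Y"
    unfolding X_def Y_def by (rule br_affine)
  also have "\<dots> = 0" using tzero[OF o] unfolding t_def .
  finally have z0: "br p1 p2 p3 p4 ((1 - t) *\<^sub>R x + t *\<^sub>R y) = 0" .
  have "a \<bullet> ((1 - t) *\<^sub>R x + t *\<^sub>R y) = (1 - t) * (a \<bullet> x) + t * (a \<bullet> y)"
    by (simp add: inner_add_right)
  also have "\<dots> < (1 - t) * b + t * b"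
  proof (cases "t = 0")
    case True then show ?thesis using h(5) by simp
  next
    case False
    then have "t > 0" using t01 by simp
    then have "t * (a \<bullet> y) < t * b" using h(6) by simp
    moreover have "(1 - t) * (a \<bullet> x) \<le> (1 - t) * b" using h(5) t01 by (intro mult_left_mono) auto
    ultimately show ?thesis by linarith
  qed
  also have "\<dots> = b" by (simp add: algebra_simps)
  finally have "a \<bullet> ((1 - t) *\<^sub>R x + t *\<^sub>R y) < b" .
  from br_nonzero[OF ind dist h(1-4) this] z0 show False by simp
qed

definition d4 :: "real\<Rightarrow>real\<Rightarrow>real\<Rightarrow>real\<Rightarrow>real\<Rightarrow>real\<Rightarrow>real\<Rightarrow>real\<Rightarrow>real\<Rightarrow>real\<Rightarrow>real\<Rightarrow>real\<Rightarrow>real\<Rightarrow>real\<Rightarrow>real\<Rightarrow>real\<Rightarrow>real" where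
"d4 a1 a2 a3 a4 b1 b2 b3 b4 c1 c2 c3 c4 e1 e2 e3 e4 =
  (a1*b2-a2*b1)*(c3*e4-c4*e3) - (a1*b3-a3*b1)*(c2*e4-c4*e2) + (a1*b4-a4*b1)*(c2*e3-c3*e2)
 + (a2*b3-a3*b2)*(c1*e4-c4*e1) - (a2*b4-a4*b2)*(c1*e3-c3*e1) + (a3*b4-a4*b3)*(c1*e2-c2*e1)"
lemma d4_gp: "d4 u1 u2 u3 u4 v1 v2 v3 v4 p1 p2 p3 p4 q1 q2 q3 q4 * d4 u1 u2 u3 u4 v1 v2 v3 v4 r1 r2 r3 r4 s1 s2 s3 s4
 - d4 u1 u2 u3 u4 v1 v2 v3 v4 p1 p2 p3 p4 r1 r2 r3 r4 * d4 u1 u2 u3 u4 v1 v2 v3 v4 q1 q2 q3 q4 s1 s2 s3 s4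
 + d4 u1 u2 u3 u4 v1 v2 v3 v4 p1 p2 p3 p4 s1 s2 s3 s4 * d4 u1 u2 u3 u4 v1 v2 v3 v4 q1 q2 q3 q4 r1 r2 r3 r4 = 0"
  unfolding d4_def by algebra
lemma d4v_d4: "d4v a b c e = d4 (a$1) (a$2) (a$3) (a$4) (b$1) (b$2) (b$3) (b$4) (c$1) (c$2) (c$3) (c$4) (e$1) (e$2) (e$3) (e$4)"
  unfolding d4v_def d4_def ..
lemma d4v_gp:
  "d4v u v p q * d4v u v r s - d4v u v p r * d4v u v q s + d4v u v p s * d4v u v q r = 0"
  unfolding d4v_d4 by (rule d4_gp)
lemma br_gp:
  "br a1 a2 a3 p q * br a1 a2 a3 r s - br a1 a2 a3 p r * br a1 a2 a3 q s + br a1 a2 a3 p s * br a1 a2 a3 q r = 0"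
  unfolding br_def by (rule d4v_gp)

lemma br_sw12: "br a b c d e = - br b a c d e" unfolding br_def d4v_d4 d4_def by (simp, algebra)
lemma br_sw23: "br a b c d e = - br a c b d e" unfolding br_def d4v_d4 d4_def by (simp, algebra)
lemma br_sw34: "br a b c d e = - br a b d c e" unfolding br_def d4v_d4 d4_def by (simp, algebra)
lemma br_sw45: "br a b c d e = - br a b c e d" unfolding br_def d4v_d4 d4_def by (simp, algebra)


lemma facet_hyp:
  fixes P :: "(real^4) set" and f :: "'v \<Rightarrow> real^4"
  assumes sp: "simplicial_polytope 4 P"
    and bij: "bij_betw f V (poly_vertices P)"
    and iso: "\<forall>S. S \<subseteq> V \<longrightarrow> (S \<in> K \<longleftrightarrow> f ` S \<in> boundary_complex P)"
    and FK: "F \<in> K" "F \<subseteq> V"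
  shows "\<exists>a b. (\<forall>y\<in>F. a \<bullet> f y = b) \<and> (\<forall>y\<in>V-F. a \<bullet> f y < b) \<and> \<not> affine_dependent (f ` F)"
proof -
  have "f ` F \<in> boundary_complex P" using iso FK by blast
  then obtain G where G: "G face_of P" "G \<noteq> P" "poly_vertices G = f ` F"
    unfolding boundary_complex_def by blast
  have pP: "polytope P" using sp unfolding simplicial_polytope_def by blast
  obtain m where "m simplex G" using sp G unfolding simplicial_polytope_def by blast
  then obtain C where C: "\<not> affine_dependent C" "G = convex hull C"
    unfolding simplex_def by blast
  have "poly_vertices G = C"
    unfolding poly_vertices_def C(2) using extreme_point_of_convex_hull_affine_independent[OF C(1)] by blast
  then have fFC: "f ` F = C" using G(3) by simp
  have "G exposed_face_of P"
    using exposed_face_of_polyhedron[OF polytope_imp_polyhedron[OF pP]] G(1) by blast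
  then obtain a b where ab: "P \<subseteq> {x. a \<bullet> x \<le> b}" "G = P \<inter> {x. a \<bullet> x = b}"
    unfolding exposed_face_of_def by blast
  have inj: "inj_on f V" using bij unfolding bij_betw_def by blast
  have "\<forall>y\<in>F. a \<bullet> f y = b"
  proof
    fix y assume "y \<in> F"
    then have "f y \<in> C" using fFC by blast
    then have "f y \<in> G" unfolding C(2) using hull_subset[of C convex] by blast
    then show "a \<bullet> f y = b" using ab(2) by blast
  qed
  moreover have "\<forall>y\<in>V-F. a \<bullet> f y < b"
  proof
    fix y assume y: "y \<in> V - F"
    then have "f y \<in> poly_vertices P" using bij unfolding bij_betw_def by blast
    then have ex: "f y extreme_point_of P" unfolding poly_vertices_def by simp
    then have "f y \<in> P" unfolding extreme_point_of_def by blast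
    then have le: "a \<bullet> f y \<le> b" using ab(1) by blast
    show "a \<bullet> f y < b"
    proof (rule ccontr)
      assume "\<not> a \<bullet> f y < b"
      then have "a \<bullet> f y = b" using le by simp
      then have "f y \<in> G" using ab(2) \<open>f y \<in> P\<close> by blast
      then have "f y extreme_point_of G" using extreme_point_of_face[OF G(1)] ex by blast
      then have "f y \<in> f ` F" using G(3) unfolding poly_vertices_def by blast
      then obtain z where "z \<in> F" "f y = f z" by blast
      then have "y = z" using inj y FK(2) unfolding inj_on_def by blast
      then show False using y \<open>z \<in> F\<close> by blast
    qed
  qed
  moreover have "\<not> affine_dependent (f ` F)" using fFC C(1) by simp
  ultimately show ?thesis by blast
qed

lemma facet_br:
  fixes P :: "(real^4) set" and f :: "'v \<Rightarrow> real^4"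
  assumes sp: "simplicial_polytope 4 P"
    and bij: "bij_betw f V (poly_vertices P)"
    and iso: "\<forall>S. S \<subseteq> V \<longrightarrow> (S \<in> K \<longleftrightarrow> f ` S \<in> boundary_complex P)"
    and FK: "{p1,p2,p3,p4} \<in> K" "{p1,p2,p3,p4} \<subseteq> V"
    and d: "distinct [p1,p2,p3,p4]"
    and xy: "x \<in> V" "y \<in> V" "x \<notin> {p1,p2,p3,p4}" "y \<notin> {p1,p2,p3,p4}"
  shows "br (f p1) (f p2) (f p3) (f p4) (f x) * br (f p1) (f p2) (f p3) (f p4) (f y) > 0"
proof -
  obtain a b where ab: "\<forall>z\<in>{p1,p2,p3,p4}. a \<bullet> f z = b" "\<forall>z\<in>V-{p1,p2,p3,p4}. a \<bullet> f z < b"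
      "\<not> affine_dependent (f ` {p1,p2,p3,p4})"
    using facet_hyp[OF sp bij iso FK] by blast
  have inj: "inj_on f V" using bij unfolding bij_betw_def by blast
  have df: "distinct [f p1, f p2, f p3, f p4]"
    using d FK(2) inj unfolding inj_on_def by auto
  show ?thesis
  proof (rule br_same_sign[where a = a and b = b])
    show "\<not> affine_dependent {f p1, f p2, f p3, f p4}" using ab(3) by simp
    show "distinct [f p1, f p2, f p3, f p4]" by (rule df)
    show "a \<bullet> f p1 = b" "a \<bullet> f p2 = b" "a \<bullet> f p3 = b" "a \<bullet> f p4 = b" using ab(1) by auto
    show "a \<bullet> f x < b" "a \<bullet> f y < b" using ab(2) xy by auto
  qed
qed
lemma pp1: "(x::real) * y > 0 \<Longrightarrow> x > 0 \<Longrightarrow> y > 0" by (simp add: zero_less_mult_iff)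
lemma pp2: "(x::real) * y > 0 \<Longrightarrow> x < 0 \<Longrightarrow> y < 0" by (simp add: zero_less_mult_iff)
lemma pp3: "(x::real) * y > 0 \<Longrightarrow> y > 0 \<Longrightarrow> x > 0" by (simp add: zero_less_mult_iff)
lemma pp4: "(x::real) * y > 0 \<Longrightarrow> y < 0 \<Longrightarrow> x < 0" by (simp add: zero_less_mult_iff)
lemma pn1: "(x::real) * y < 0 \<Longrightarrow> x > 0 \<Longrightarrow> y < 0" by (simp add: mult_less_0_iff)
lemma pn2: "(x::real) * y < 0 \<Longrightarrow> x < 0 \<Longrightarrow> y > 0" by (simp add: mult_less_0_iff)
lemma pn3: "(x::real) * y < 0 \<Longrightarrow> y > 0 \<Longrightarrow> x < 0" by (simp add: mult_less_0_iff)
lemma pn4: "(x::real) * y < 0 \<Longrightarrow> y < 0 \<Longrightarrow> x > 0" by (simp add: mult_less_0_iff)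

lemma core:
  fixes b_m5_m4_m3_m2_m1 b_m5_m4_m3_m2_1 b_m5_m4_m3_m2_2 b_m5_m4_m3_m2_3 b_m5_m4_m3_m2_5 b_m5_m4_m3_m1_2 b_m5_m4_m3_1_2 b_m5_m4_m3_2_4 b_m5_m4_m2_m1_1 b_m5_m4_m2_m1_2 b_m5_m4_m2_m1_3 b_m5_m4_m2_m1_4 b_m5_m4_m2_m1_5 b_m5_m4_m2_1_2 b_m5_m4_m2_1_3 b_m5_m4_m2_1_5 b_m5_m4_m2_2_3 b_m5_m4_m2_2_4 b_m5_m4_m1_2_3 b_m5_m4_m1_2_4 b_m5_m4_1_2_3 b_m5_m4_1_2_4 b_m5_m4_1_2_5 b_m5_m4_2_3_4 b_m5_m3_m2_m1_1 b_m5_m3_m2_m1_2 b_m5_m3_m2_m1_3 b_m5_m3_m2_m1_4 b_m5_m3_m2_m1_5 b_m5_m3_m2_1_2 b_m5_m3_m1_1_2 b_m5_m3_m1_2_3 b_m5_m3_m1_2_4 b_m5_m3_m1_2_5 b_m5_m3_1_2_3 b_m5_m3_1_2_4 b_m5_m3_1_2_5 b_m5_m3_2_3_4 b_m5_m2_m1_1_2 b_m5_m2_m1_1_4 b_m5_m2_m1_1_5 b_m5_m2_m1_2_4 b_m5_m2_m1_3_4 b_m5_m2_m1_3_5 b_m5_m2_m1_4_5 b_m5_m2_1_2_4 b_m5_m2_1_2_5 b_m5_m2_1_3_5 b_m5_m2_2_3_4 b_m5_m1_1_2_3 b_m5_m1_1_2_4 b_m5_m1_2_3_4 b_m5_m1_2_4_5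 b_m5_1_2_3_4 b_m5_1_2_3_5 b_m5_1_2_4_5 b_m5_2_3_4_5 b_m4_m3_m2_m1_1 b_m4_m3_m2_m1_3 b_m4_m3_m2_m1_4 b_m4_m3_m2_m1_5 b_m4_m3_m2_1_2 b_m4_m3_m2_1_3 b_m4_m3_m2_1_5 b_m4_m3_m2_2_5 b_m4_m3_m2_3_5 b_m4_m3_m2_4_5 b_m4_m3_m1_2_4 b_m4_m3_1_2_3 b_m4_m3_1_2_4 b_m4_m3_1_2_5 b_m4_m2_m1_1_3 b_m4_m2_m1_1_4 b_m4_m2_m1_1_5 b_m4_m2_m1_2_3 b_m4_m2_m1_2_4 b_m4_m2_m1_3_4 b_m4_m2_m1_3_5 b_m4_m2_1_2_3 b_m4_m2_1_2_4 b_m4_m2_1_2_5 b_m4_m2_1_3_4 b_m4_m2_1_3_5 b_m4_m2_1_4_5 b_m4_m1_1_2_3 b_m4_m1_1_2_4 b_m4_1_2_3_4 b_m4_1_2_3_5 b_m4_1_2_4_5 b_m3_m2_m1_1_4 b_m3_m2_m1_1_5 b_m3_m2_m1_2_4 b_m3_m2_m1_3_4 b_m3_m2_m1_3_5 b_m3_m2_m1_4_5 b_m3_m2_1_2_4 b_m3_m2_1_3_5 b_m3_m1_1_2_4 b_m3_m1_2_3_4 b_m3_m1_2_4_5 b_m3_1_2_3_4 b_m3_1_2_3_5 b_m3_1_2_4_5 b_m2_m1_1_2_4 b_m2_m1_1_3_5 b_m2_m1_2_3_5 b_m2_m1_3_4_5 b_m2_1_2_3_5 b_m2_1_3_4_5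 b_m1_1_2_3_5 b_1_2_3_4_5 :: real
  assumes
    pf0: "b_m5_1_2_3_5 * b_m4_1_2_3_5 > 0"
    and pf1: "b_m5_1_2_3_5 * b_m3_1_2_3_5 > 0"
    and pf2: "b_m5_1_2_3_5 * b_m2_1_2_3_5 > 0"
    and pf3: "b_m5_1_2_3_5 * b_m1_1_2_3_5 > 0"
    and pf4: "b_m5_1_2_3_5 * b_1_2_3_4_5 < 0"
    and pf5: "b_m5_m2_m1_3_5 * b_m4_m2_m1_3_5 > 0"
    and pf6: "b_m5_m2_m1_3_5 * b_m3_m2_m1_3_5 > 0"
    and pf7: "b_m5_m2_m1_3_5 * b_m2_m1_1_3_5 > 0"
    and pf8: "b_m5_m2_m1_3_5 * b_m2_m1_2_3_5 > 0"
    and pf9: "b_m5_m2_m1_3_5 * b_m2_m1_3_4_5 < 0"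
    and pf10: "b_m5_m2_1_3_5 * b_m4_m2_1_3_5 > 0"
    and pf11: "b_m5_m2_1_3_5 * b_m3_m2_1_3_5 > 0"
    and pf12: "b_m5_m2_1_3_5 * b_m2_m1_1_3_5 < 0"
    and pf13: "b_m5_m2_1_3_5 * b_m2_1_2_3_5 > 0"
    and pf14: "b_m5_m2_1_3_5 * b_m2_1_3_4_5 < 0"
    and pf15: "b_m5_m4_m2_1_5 * b_m4_m3_m2_1_5 < 0"
    and pf16: "b_m5_m4_m2_1_5 * b_m4_m2_m1_1_5 > 0"
    and pf17: "b_m5_m4_m2_1_5 * b_m4_m2_1_2_5 < 0"
    and pf18: "b_m5_m4_m2_1_5 * b_m4_m2_1_3_5 < 0"
    and pf19: "b_m5_m4_m2_1_5 * b_m4_m2_1_4_5 < 0"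
    and pf20: "b_m5_m4_m3_m2_5 * b_m4_m3_m2_m1_5 < 0"
    and pf21: "b_m5_m4_m3_m2_5 * b_m4_m3_m2_1_5 < 0"
    and pf22: "b_m5_m4_m3_m2_5 * b_m4_m3_m2_2_5 < 0"
    and pf23: "b_m5_m4_m3_m2_5 * b_m4_m3_m2_3_5 < 0"
    and pf24: "b_m5_m4_m3_m2_5 * b_m4_m3_m2_4_5 < 0"
    and pf25: "b_m5_m3_1_2_4 * b_m4_m3_1_2_4 > 0"
    and pf26: "b_m5_m3_1_2_4 * b_m3_m2_1_2_4 < 0"
    and pf27: "b_m5_m3_1_2_4 * b_m3_m1_1_2_4 < 0"
    and pf28: "b_m5_m3_1_2_4 * b_m3_1_2_3_4 < 0"
    and pf29: "b_m5_m3_1_2_4 * b_m3_1_2_4_5 > 0"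
    and pf30: "b_m5_m4_1_2_3 * b_m4_m3_1_2_3 < 0"
    and pf31: "b_m5_m4_1_2_3 * b_m4_m2_1_2_3 < 0"
    and pf32: "b_m5_m4_1_2_3 * b_m4_m1_1_2_3 < 0"
    and pf33: "b_m5_m4_1_2_3 * b_m4_1_2_3_4 > 0"
    and pf34: "b_m5_m4_1_2_3 * b_m4_1_2_3_5 > 0"
    and pf35: "b_m5_m4_m2_1_3 * b_m4_m3_m2_1_3 < 0"
    and pf36: "b_m5_m4_m2_1_3 * b_m4_m2_m1_1_3 > 0"
    and pf37: "b_m5_m4_m2_1_3 * b_m4_m2_1_2_3 < 0"
    and pf38: "b_m5_m4_m2_1_3 * b_m4_m2_1_3_4 > 0"
    and pf39: "b_m5_m4_m2_1_3 * b_m4_m2_1_3_5 > 0"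
    and pf40: "b_m5_m4_m3_m2_m1 * b_m5_m3_m2_m1_1 < 0"
    and pf41: "b_m5_m4_m3_m2_m1 * b_m5_m3_m2_m1_2 < 0"
    and pf42: "b_m5_m4_m3_m2_m1 * b_m5_m3_m2_m1_3 < 0"
    and pf43: "b_m5_m4_m3_m2_m1 * b_m5_m3_m2_m1_4 < 0"
    and pf44: "b_m5_m4_m3_m2_m1 * b_m5_m3_m2_m1_5 < 0"
    and pf45: "b_m5_m4_m3_1_2 * b_m5_m3_m2_1_2 < 0"
    and pf46: "b_m5_m4_m3_1_2 * b_m5_m3_m1_1_2 < 0"
    and pf47: "b_m5_m4_m3_1_2 * b_m5_m3_1_2_3 < 0"
    and pf48: "b_m5_m4_m3_1_2 * b_m5_m3_1_2_4 < 0"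
    and pf49: "b_m5_m4_m3_1_2 * b_m5_m3_1_2_5 < 0"
    and pf50: "b_m5_m4_m3_m1_2 * b_m5_m3_m2_m1_2 < 0"
    and pf51: "b_m5_m4_m3_m1_2 * b_m5_m3_m1_1_2 > 0"
    and pf52: "b_m5_m4_m3_m1_2 * b_m5_m3_m1_2_3 < 0"
    and pf53: "b_m5_m4_m3_m1_2 * b_m5_m3_m1_2_4 < 0"
    and pf54: "b_m5_m4_m3_m1_2 * b_m5_m3_m1_2_5 < 0"
    and pf55: "b_m5_m4_m1_2_4 * b_m5_m3_m1_2_4 > 0"
    and pf56: "b_m5_m4_m1_2_4 * b_m5_m2_m1_2_4 > 0"
    and pf57: "b_m5_m4_m1_2_4 * b_m5_m1_1_2_4 < 0"
    and pf58: "b_m5_m4_m1_2_4 * b_m5_m1_2_3_4 > 0"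
    and pf59: "b_m5_m4_m1_2_4 * b_m5_m1_2_4_5 < 0"
    and pf60: "b_m5_m4_2_3_4 * b_m5_m3_2_3_4 > 0"
    and pf61: "b_m5_m4_2_3_4 * b_m5_m2_2_3_4 > 0"
    and pf62: "b_m5_m4_2_3_4 * b_m5_m1_2_3_4 > 0"
    and pf63: "b_m5_m4_2_3_4 * b_m5_1_2_3_4 > 0"
    and pf64: "b_m5_m4_2_3_4 * b_m5_2_3_4_5 < 0"
    and pf65: "b_m5_m4_m2_m1_3 * b_m4_m3_m2_m1_3 < 0"
    and pf66: "b_m5_m4_m2_m1_3 * b_m4_m2_m1_1_3 < 0"
    and pf67: "b_m5_m4_m2_m1_3 * b_m4_m2_m1_2_3 < 0"
    and pf68: "b_m5_m4_m2_m1_3 * b_m4_m2_m1_3_4 > 0"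
    and pf69: "b_m5_m4_m2_m1_3 * b_m4_m2_m1_3_5 > 0"
    and pf70: "b_m5_m3_m2_m1_4 * b_m4_m3_m2_m1_4 > 0"
    and pf71: "b_m5_m3_m2_m1_4 * b_m3_m2_m1_1_4 < 0"
    and pf72: "b_m5_m3_m2_m1_4 * b_m3_m2_m1_2_4 < 0"
    and pf73: "b_m5_m3_m2_m1_4 * b_m3_m2_m1_3_4 < 0"
    and pf74: "b_m5_m3_m2_m1_4 * b_m3_m2_m1_4_5 > 0"
    and pf75: "b_m5_m3_m1_2_4 * b_m4_m3_m1_2_4 > 0"
    and pf76: "b_m5_m3_m1_2_4 * b_m3_m2_m1_2_4 < 0"
    and pf77: "b_m5_m3_m1_2_4 * b_m3_m1_1_2_4 > 0"
    and pf78: "b_m5_m3_m1_2_4 * b_m3_m1_2_3_4 < 0"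
    and pf79: "b_m5_m3_m1_2_4 * b_m3_m1_2_4_5 > 0"
    and gp0: "b_m5_m4_m3_m2_m1 * b_m5_m2_m1_3_5 - b_m5_m4_m2_m1_3 * b_m5_m3_m2_m1_5 + b_m5_m4_m2_m1_5 * b_m5_m3_m2_m1_3 = 0"
    and gp1: "b_m5_m4_m3_1_2 * b_m5_1_2_3_4 - b_m5_m4_1_2_3 * b_m5_m3_1_2_4 + b_m5_m4_1_2_4 * b_m5_m3_1_2_3 = 0"
    and gp2: "b_m5_m4_m3_1_2 * b_m5_1_2_3_5 - b_m5_m4_1_2_3 * b_m5_m3_1_2_5 + b_m5_m4_1_2_5 * b_m5_m3_1_2_3 = 0"
    and gp3: "b_m5_m3_m1_1_2 * b_m5_1_2_3_4 - b_m5_m3_1_2_3 * b_m5_m1_1_2_4 + b_m5_m3_1_2_4 * b_m5_m1_1_2_3 = 0"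
    and gp4: "b_m5_m4_m1_2_3 * b_m5_1_2_3_4 - b_m5_m4_1_2_3 * b_m5_m1_2_3_4 + b_m5_m4_2_3_4 * b_m5_m1_1_2_3 = 0"
    and gp5: "b_m5_m4_m3_2_4 * b_m5_m1_1_2_4 - b_m5_m4_m1_2_4 * b_m5_m3_1_2_4 + b_m5_m4_1_2_4 * b_m5_m3_m1_2_4 = 0"
    and gp6: "- b_m5_m4_m3_m2_m1 * b_m4_m3_m2_3_5 + b_m5_m4_m3_m2_3 * b_m4_m3_m2_m1_5 - b_m5_m4_m3_m2_5 * b_m4_m3_m2_m1_3 = 0"
    and gp7: "- b_m5_m4_m3_m2_1 * b_m4_m3_m2_3_5 + b_m5_m4_m3_m2_3 * b_m4_m3_m2_1_5 - b_m5_m4_m3_m2_5 * b_m4_m3_m2_1_3 = 0"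
    and gp8: "b_m4_m3_m2_m1_1 * b_m4_m3_m2_3_5 - b_m4_m3_m2_m1_3 * b_m4_m3_m2_1_5 + b_m4_m3_m2_m1_5 * b_m4_m3_m2_1_3 = 0"
    and gp9: "- b_m5_m4_m3_m2_m1 * b_m4_m2_m1_1_3 + b_m5_m4_m2_m1_1 * b_m4_m3_m2_m1_3 - b_m5_m4_m2_m1_3 * b_m4_m3_m2_m1_1 = 0"
    and gp10: "- b_m5_m4_m3_m2_m1 * b_m4_m2_m1_3_4 + b_m5_m4_m2_m1_3 * b_m4_m3_m2_m1_4 - b_m5_m4_m2_m1_4 * b_m4_m3_m2_m1_3 = 0"
    and gp11: "- b_m5_m4_m2_1_2 * b_m4_1_2_3_5 + b_m5_m4_1_2_3 * b_m4_m2_1_2_5 - b_m5_m4_1_2_5 * b_m4_m2_1_2_3 = 0"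
    and gp12: "- b_m5_m4_m2_2_3 * b_m4_m1_1_2_3 + b_m5_m4_m1_2_3 * b_m4_m2_1_2_3 - b_m5_m4_1_2_3 * b_m4_m2_m1_2_3 = 0"
    and gp13: "b_m4_m3_m2_m1_5 * b_m3_m2_1_3_5 - b_m4_m3_m2_1_5 * b_m3_m2_m1_3_5 + b_m4_m3_m2_3_5 * b_m3_m2_m1_1_5 = 0"
    and gp14: "- b_m5_m4_m2_m1_1 * b_m3_m2_m1_1_5 + b_m5_m3_m2_m1_1 * b_m4_m2_m1_1_5 - b_m5_m2_m1_1_5 * b_m4_m3_m2_m1_1 = 0"
    and gp15: "- b_m5_m4_m2_m1_3 * b_m3_m2_m1_3_4 + b_m5_m3_m2_m1_3 * b_m4_m2_m1_3_4 - b_m5_m2_m1_3_4 * b_m4_m3_m2_m1_3 = 0"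
    and gp16: "- b_m5_m3_m2_m1_4 * b_m2_m1_3_4_5 + b_m5_m2_m1_3_4 * b_m3_m2_m1_4_5 - b_m5_m2_m1_4_5 * b_m3_m2_m1_3_4 = 0"
    and gp17: "- b_m5_m3_1_2_4 * b_1_2_3_4_5 + b_m5_1_2_3_4 * b_m3_1_2_4_5 - b_m5_1_2_4_5 * b_m3_1_2_3_4 = 0"
    and gp18: "b_m5_m4_1_2_5 * b_m2_1_2_3_5 - b_m5_m2_1_2_5 * b_m4_1_2_3_5 + b_m5_1_2_3_5 * b_m4_m2_1_2_5 = 0"
    and gp19: "- b_m5_m4_m3_m2_1 * b_m5_m4_m2_2_3 + b_m5_m4_m3_m2_2 * b_m5_m4_m2_1_3 - b_m5_m4_m3_m2_3 * b_m5_m4_m2_1_2 = 0"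
    and gp20: "b_m5_m4_m2_m1_1 * b_m5_m4_m2_2_3 - b_m5_m4_m2_m1_2 * b_m5_m4_m2_1_3 + b_m5_m4_m2_m1_3 * b_m5_m4_m2_1_2 = 0"
    and gp21: "- b_m5_m4_m3_m2_2 * b_m5_m4_m1_2_4 + b_m5_m4_m3_m1_2 * b_m5_m4_m2_2_4 - b_m5_m4_m3_2_4 * b_m5_m4_m2_m1_2 = 0"
    and gp22: "b_m5_m4_m2_m1_1 * b_m5_m2_m1_4_5 - b_m5_m4_m2_m1_4 * b_m5_m2_m1_1_5 + b_m5_m4_m2_m1_5 * b_m5_m2_m1_1_4 = 0"
    and gp23: "b_m5_m3_m2_m1_1 * b_m5_m2_m1_2_4 - b_m5_m3_m2_m1_2 * b_m5_m2_m1_1_4 + b_m5_m3_m2_m1_4 * b_m5_m2_m1_1_2 = 0"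
    and gp24: "b_m5_m4_m2_m1_2 * b_m5_m2_1_2_4 - b_m5_m4_m2_1_2 * b_m5_m2_m1_2_4 + b_m5_m4_m2_2_4 * b_m5_m2_m1_1_2 = 0"
    and gp25: "b_m5_m4_m2_1_2 * b_m5_1_2_4_5 - b_m5_m4_1_2_4 * b_m5_m2_1_2_5 + b_m5_m4_1_2_5 * b_m5_m2_1_2_4 = 0"
    and gp26: "- b_m5_m4_m3_m2_m1 * b_m4_m2_m1_1_5 + b_m5_m4_m2_m1_1 * b_m4_m3_m2_m1_5 - b_m5_m4_m2_m1_5 * b_m4_m3_m2_m1_1 = 0"
    and gp27: "- b_m5_m4_m2_m1_1 * b_m4_m2_m1_3_4 + b_m5_m4_m2_m1_3 * b_m4_m2_m1_1_4 - b_m5_m4_m2_m1_4 * b_m4_m2_m1_1_3 = 0"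
    and gp28: "- b_m5_m4_m3_1_2 * b_m4_1_2_3_4 + b_m5_m4_1_2_3 * b_m4_m3_1_2_4 - b_m5_m4_1_2_4 * b_m4_m3_1_2_3 = 0"
    and gp29: "- b_m5_m4_m3_1_2 * b_m4_1_2_3_5 + b_m5_m4_1_2_3 * b_m4_m3_1_2_5 - b_m5_m4_1_2_5 * b_m4_m3_1_2_3 = 0"
    and gp30: "- b_m5_m4_1_2_3 * b_m4_1_2_4_5 + b_m5_m4_1_2_4 * b_m4_1_2_3_5 - b_m5_m4_1_2_5 * b_m4_1_2_3_4 = 0"
    and gp31: "b_m4_m3_m2_1_2 * b_m4_1_2_3_5 - b_m4_m3_1_2_3 * b_m4_m2_1_2_5 + b_m4_m3_1_2_5 * b_m4_m2_1_2_3 = 0"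
    and gp32: "b_m4_m2_1_2_3 * b_m4_1_2_4_5 - b_m4_m2_1_2_4 * b_m4_1_2_3_5 + b_m4_m2_1_2_5 * b_m4_1_2_3_4 = 0"
    and gp33: "- b_m5_m4_m2_m1_1 * b_m3_m2_m1_1_4 + b_m5_m3_m2_m1_1 * b_m4_m2_m1_1_4 - b_m5_m2_m1_1_4 * b_m4_m3_m2_m1_1 = 0"
    and gp34: "b_m5_m4_m2_m1_4 * b_m3_m2_m1_2_4 - b_m5_m3_m2_m1_4 * b_m4_m2_m1_2_4 + b_m5_m2_m1_2_4 * b_m4_m3_m2_m1_4 = 0"
    and gp35: "b_m5_m4_m2_m1_4 * b_m2_m1_1_2_4 - b_m5_m2_m1_1_4 * b_m4_m2_m1_2_4 + b_m5_m2_m1_2_4 * b_m4_m2_m1_1_4 = 0"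
    and gp36: "- b_m5_m4_m2_1_2 * b_m3_m2_1_2_4 + b_m5_m3_m2_1_2 * b_m4_m2_1_2_4 - b_m5_m2_1_2_4 * b_m4_m3_m2_1_2 = 0"
    and gp37: "b_m5_m4_1_2_4 * b_m3_m1_1_2_4 - b_m5_m3_1_2_4 * b_m4_m1_1_2_4 + b_m5_m1_1_2_4 * b_m4_m3_1_2_4 = 0"
    and gp38: "b_m5_m4_1_2_4 * b_m2_m1_1_2_4 - b_m5_m2_1_2_4 * b_m4_m1_1_2_4 + b_m5_m1_1_2_4 * b_m4_m2_1_2_4 = 0"
  shows False
proof -
  have nzA: "b_m5_1_2_3_5 \<noteq> 0" using pf0 by auto
  have nzB: "b_m5_m3_1_2_4 \<noteq> 0" using pf25 by auto
  have case0: False if cA: "b_m5_1_2_3_5 > 0" and cB: "b_m5_m3_1_2_4 < 0"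
  proof -
    have s2: "b_m4_1_2_3_5 > 0" by (rule pp1[OF pf0 cA])
    have s3: "b_m3_1_2_3_5 > 0" by (rule pp1[OF pf1 cA])
    have s4: "b_m2_1_2_3_5 > 0" by (rule pp1[OF pf2 cA])
    have s5: "b_m1_1_2_3_5 > 0" by (rule pp1[OF pf3 cA])
    have s6: "b_1_2_3_4_5 < 0" by (rule pn1[OF pf4 cA])
    have s7: "b_m5_m2_1_3_5 > 0" by (rule pp3[OF pf13 s4])
    have s8: "b_m2_1_3_4_5 < 0" by (rule pn1[OF pf14 s7])
    have s9: "b_m4_m3_1_2_4 < 0" by (rule pp2[OF pf25 cB])
    have s10: "b_m3_m2_1_2_4 > 0" by (rule pn2[OF pf26 cB])
    have s11: "b_m3_m1_1_2_4 > 0" by (rule pn2[OF pf27 cB])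
    have s12: "b_m3_1_2_3_4 > 0" by (rule pn2[OF pf28 cB])
    have s13: "b_m3_1_2_4_5 < 0" by (rule pp2[OF pf29 cB])
    have s14: "b_m5_m4_1_2_3 > 0" by (rule pp3[OF pf34 s2])
    have s15: "b_m5_m4_m3_1_2 > 0" by (rule pn4[OF pf48 cB])
    have s16: "b_m5_m3_1_2_5 < 0" by (rule pn1[OF pf49 s15])
    have s17: "b_m5_m3_m1_2_4 > 0" by (rule pp3[OF pf77 s11])
    have s18: "b_m3_m1_2_3_4 < 0" by (rule pn1[OF pf78 s17])
    have s19: "b_m3_m1_2_4_5 > 0" by (rule pp1[OF pf79 s17])
    have s20: "b_m4_m2_1_3_5 > 0" by (rule pp1[OF pf10 s7])
    have s21: "b_m3_m2_1_3_5 > 0" by (rule pp1[OF pf11 s7])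
    have s22: "b_m2_m1_1_3_5 < 0" by (rule pn1[OF pf12 s7])
    have s23: "b_m5_m4_m2_1_5 < 0" by (rule pn3[OF pf18 s20])
    have s24: "b_m4_m2_1_4_5 > 0" by (rule pn2[OF pf19 s23])
    have s25: "b_m4_m3_1_2_3 < 0" by (rule pn1[OF pf30 s14])
    have s26: "b_m4_m2_1_2_3 < 0" by (rule pn1[OF pf31 s14])
    have s27: "b_m4_m1_1_2_3 < 0" by (rule pn1[OF pf32 s14])
    have s28: "b_m4_1_2_3_4 > 0" by (rule pp1[OF pf33 s14])
    have s29: "b_m5_m4_m2_1_3 > 0" by (rule pn4[OF pf37 s26])
    have s30: "b_m4_m2_1_3_4 > 0" by (rule pp1[OF pf38 s29])
    have s31: "b_m5_m3_m2_1_2 < 0" by (rule pn1[OF pf45 s15])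
    have s32: "b_m5_m3_m1_1_2 < 0" by (rule pn1[OF pf46 s15])
    have s33: "b_m5_m3_1_2_3 < 0" by (rule pn1[OF pf47 s15])
    have s34: "b_m5_m4_m3_m1_2 < 0" by (rule pp4[OF pf51 s32])
    have s35: "b_m5_m3_m1_2_3 > 0" by (rule pn2[OF pf52 s34])
    have s36: "b_m5_m3_m1_2_5 > 0" by (rule pn2[OF pf54 s34])
    have s37: "b_m5_m4_m1_2_4 > 0" by (rule pp3[OF pf55 s17])
    have s38: "b_m5_m2_m1_2_4 > 0" by (rule pp1[OF pf56 s37])
    have s39: "b_m5_m1_1_2_4 < 0" by (rule pn1[OF pf57 s37])
    have s40: "b_m5_m1_2_3_4 > 0" by (rule pp1[OF pf58 s37])
    have s41: "b_m5_m1_2_4_5 < 0" by (rule pn1[OF pf59 s37])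
    have s42: "b_m5_m4_2_3_4 > 0" by (rule pp3[OF pf62 s40])
    have s43: "b_m5_1_2_3_4 > 0" by (rule pp1[OF pf63 s42])
    have s44: "b_m5_2_3_4_5 < 0" by (rule pn1[OF pf64 s42])
    have s45: "b_m4_m3_m1_2_4 > 0" by (rule pp1[OF pf75 s17])
    have s46: "b_m3_m2_m1_2_4 < 0" by (rule pn1[OF pf76 s17])
    have s47: "b_m5_m2_m1_3_5 < 0" by (rule pp4[OF pf7 s22])
    have s48: "b_m2_m1_2_3_5 < 0" by (rule pp2[OF pf8 s47])
    have s49: "b_m2_m1_3_4_5 > 0" by (rule pn2[OF pf9 s47])
    have s50: "b_m4_m3_m2_1_5 > 0" by (rule pn2[OF pf15 s23])
    have s51: "b_m4_m2_m1_1_5 < 0" by (rule pp2[OF pf16 s23])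
    have s52: "b_m4_m2_1_2_5 > 0" by (rule pn2[OF pf17 s23])
    have s53: "b_m5_m4_m3_m2_5 < 0" by (rule pn3[OF pf21 s50])
    have s54: "b_m4_m3_m2_2_5 > 0" by (rule pn2[OF pf22 s53])
    have s55: "b_m4_m3_m2_3_5 > 0" by (rule pn2[OF pf23 s53])
    have s56: "b_m4_m3_m2_4_5 > 0" by (rule pn2[OF pf24 s53])
    have s57: "b_m4_m3_m2_1_3 < 0" by (rule pn1[OF pf35 s29])
    have s58: "b_m4_m2_m1_1_3 > 0" by (rule pp1[OF pf36 s29])
    have s59: "b_m5_m3_m2_m1_2 > 0" by (rule pn2[OF pf50 s34])
    have s60: "b_m5_m3_2_3_4 > 0" by (rule pp1[OF pf60 s42])
    have s61: "b_m5_m2_2_3_4 > 0" by (rule pp1[OF pf61 s42])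
    have s62: "b_m5_m4_m2_m1_3 < 0" by (rule pn3[OF pf66 s58])
    have s63: "b_m4_m2_m1_2_3 > 0" by (rule pn2[OF pf67 s62])
    have s64: "b_m4_m2_m1_3_4 < 0" by (rule pp2[OF pf68 s62])
    have s65: "b_m4_m2_m1_3_5 < 0" by (rule pp2[OF pf69 s62])
    have s66: "b_m5_m3_m2_m1_4 > 0" by (rule pn4[OF pf72 s46])
    have s67: "b_m3_m2_m1_3_4 < 0" by (rule pn1[OF pf73 s66])
    have s68: "b_m3_m2_m1_4_5 > 0" by (rule pp1[OF pf74 s66])
    have s69: "b_m3_m2_m1_3_5 < 0" by (rule pp2[OF pf6 s47])
    have s70: "b_m4_m3_m2_m1_5 > 0" by (rule pn2[OF pf20 s53])
    have s71: "b_m5_m4_m3_m2_m1 < 0" by (rule pn3[OF pf41 s59])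
    have s72: "b_m5_m3_m2_m1_3 > 0" by (rule pn2[OF pf42 s71])
    have s73: "b_m5_m3_m2_m1_5 > 0" by (rule pn2[OF pf44 s71])
    have s74: "b_m4_m3_m2_m1_3 > 0" by (rule pn2[OF pf65 s62])
    have s75: "b_m4_m3_m2_m1_4 > 0" by (rule pp1[OF pf70 s66])
    have s76: "b_m3_m2_m1_1_4 < 0" by (rule pn1[OF pf71 s66])
    have s77: "b_m5_m3_m2_m1_1 > 0" by (rule pn2[OF pf40 s71])
    have t1: "b_m5_m4_m3_m2_m1 * b_m5_m2_m1_3_5 > 0" by (rule mult_neg_neg[OF s71 s47])
    have t2: "b_m5_m4_m2_m1_3 * b_m5_m3_m2_m1_5 < 0" by (rule mult_neg_pos[OF s62 s73])
    have t3: "b_m5_m4_m2_m1_5 * b_m5_m3_m2_m1_3 < 0" using gp0 t1 t2 by linarith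
    have s78: "b_m5_m4_m2_m1_5 < 0" by (rule pn3[OF t3 s72])
    have t4: "b_m5_m4_m3_1_2 * b_m5_1_2_3_4 > 0" by (rule mult_pos_pos[OF s15 s43])
    have t5: "b_m5_m4_1_2_3 * b_m5_m3_1_2_4 < 0" by (rule mult_pos_neg[OF s14 cB])
    have t6: "b_m5_m4_1_2_4 * b_m5_m3_1_2_3 < 0" using gp1 t4 t5 by linarith
    have s79: "b_m5_m4_1_2_4 > 0" by (rule pn4[OF t6 s33])
    have t7: "b_m5_m4_m3_1_2 * b_m5_1_2_3_5 > 0" by (rule mult_pos_pos[OF s15 cA])
    have t8: "b_m5_m4_1_2_3 * b_m5_m3_1_2_5 < 0" by (rule mult_pos_neg[OF s14 s16])
    have t9: "b_m5_m4_1_2_5 * b_m5_m3_1_2_3 < 0" using gp2 t7 t8 by linarith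
    have s80: "b_m5_m4_1_2_5 > 0" by (rule pn4[OF t9 s33])
    have t10: "b_m5_m3_m1_1_2 * b_m5_1_2_3_4 < 0" by (rule mult_neg_pos[OF s32 s43])
    have t11: "b_m5_m3_1_2_3 * b_m5_m1_1_2_4 > 0" by (rule mult_neg_neg[OF s33 s39])
    have t12: "b_m5_m3_1_2_4 * b_m5_m1_1_2_3 > 0" using gp3 t10 t11 by linarith
    have s81: "b_m5_m1_1_2_3 < 0" by (rule pp2[OF t12 cB])
    have t13: "b_m5_m4_1_2_3 * b_m5_m1_2_3_4 > 0" by (rule mult_pos_pos[OF s14 s40])
    have t14: "b_m5_m4_2_3_4 * b_m5_m1_1_2_3 < 0" by (rule mult_pos_neg[OF s42 s81])
    have t15: "b_m5_m4_m1_2_3 * b_m5_1_2_3_4 > 0" using gp4 t13 t14 by linarith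
    have s82: "b_m5_m4_m1_2_3 > 0" by (rule pp3[OF t15 s43])
    have t16: "b_m5_m4_m1_2_4 * b_m5_m3_1_2_4 < 0" by (rule mult_pos_neg[OF s37 cB])
    have t17: "b_m5_m4_1_2_4 * b_m5_m3_m1_2_4 > 0" by (rule mult_pos_pos[OF s79 s17])
    have t18: "b_m5_m4_m3_2_4 * b_m5_m1_1_2_4 < 0" using gp5 t16 t17 by linarith
    have s83: "b_m5_m4_m3_2_4 > 0" by (rule pn4[OF t18 s39])
    have t19: "b_m5_m4_m3_m2_m1 * b_m4_m3_m2_3_5 < 0" by (rule mult_neg_pos[OF s71 s55])
    have t20: "b_m5_m4_m3_m2_5 * b_m4_m3_m2_m1_3 < 0" by (rule mult_neg_pos[OF s53 s74])
    have t21: "b_m5_m4_m3_m2_3 * b_m4_m3_m2_m1_5 < 0" using gp6 t19 t20 by linarith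
    have s84: "b_m5_m4_m3_m2_3 < 0" by (rule pn3[OF t21 s70])
    have t22: "b_m5_m4_m3_m2_3 * b_m4_m3_m2_1_5 < 0" by (rule mult_neg_pos[OF s84 s50])
    have t23: "b_m5_m4_m3_m2_5 * b_m4_m3_m2_1_3 > 0" by (rule mult_neg_neg[OF s53 s57])
    have t24: "b_m5_m4_m3_m2_1 * b_m4_m3_m2_3_5 < 0" using gp7 t22 t23 by linarith
    have s85: "b_m5_m4_m3_m2_1 < 0" by (rule pn3[OF t24 s55])
    have t25: "b_m4_m3_m2_m1_3 * b_m4_m3_m2_1_5 > 0" by (rule mult_pos_pos[OF s74 s50])
    have t26: "b_m4_m3_m2_m1_5 * b_m4_m3_m2_1_3 < 0" by (rule mult_pos_neg[OF s70 s57])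
    have t27: "b_m4_m3_m2_m1_1 * b_m4_m3_m2_3_5 > 0" using gp8 t25 t26 by linarith
    have s86: "b_m4_m3_m2_m1_1 > 0" by (rule pp3[OF t27 s55])
    have t28: "b_m5_m4_m3_m2_m1 * b_m4_m2_m1_1_3 < 0" by (rule mult_neg_pos[OF s71 s58])
    have t29: "b_m5_m4_m2_m1_3 * b_m4_m3_m2_m1_1 < 0" by (rule mult_neg_pos[OF s62 s86])
    have t30: "b_m5_m4_m2_m1_1 * b_m4_m3_m2_m1_3 < 0" using gp9 t28 t29 by linarith
    have s87: "b_m5_m4_m2_m1_1 < 0" by (rule pn3[OF t30 s74])
    have t31: "b_m5_m4_m3_m2_m1 * b_m4_m2_m1_3_4 > 0" by (rule mult_neg_neg[OF s71 s64])
    have t32: "b_m5_m4_m2_m1_3 * b_m4_m3_m2_m1_4 < 0" by (rule mult_neg_pos[OF s62 s75])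
    have t33: "b_m5_m4_m2_m1_4 * b_m4_m3_m2_m1_3 < 0" using gp10 t31 t32 by linarith
    have s88: "b_m5_m4_m2_m1_4 < 0" by (rule pn3[OF t33 s74])
    have t34: "b_m5_m4_1_2_3 * b_m4_m2_1_2_5 > 0" by (rule mult_pos_pos[OF s14 s52])
    have t35: "b_m5_m4_1_2_5 * b_m4_m2_1_2_3 < 0" by (rule mult_pos_neg[OF s80 s26])
    have t36: "b_m5_m4_m2_1_2 * b_m4_1_2_3_5 > 0" using gp11 t34 t35 by linarith
    have s89: "b_m5_m4_m2_1_2 > 0" by (rule pp3[OF t36 s2])
    have t37: "b_m5_m4_m1_2_3 * b_m4_m2_1_2_3 < 0" by (rule mult_pos_neg[OF s82 s26])
    have t38: "b_m5_m4_1_2_3 * b_m4_m2_m1_2_3 > 0" by (rule mult_pos_pos[OF s14 s63])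
    have t39: "b_m5_m4_m2_2_3 * b_m4_m1_1_2_3 < 0" using gp12 t37 t38 by linarith
    have s90: "b_m5_m4_m2_2_3 > 0" by (rule pn4[OF t39 s27])
    have t40: "b_m4_m3_m2_m1_5 * b_m3_m2_1_3_5 > 0" by (rule mult_pos_pos[OF s70 s21])
    have t41: "b_m4_m3_m2_1_5 * b_m3_m2_m1_3_5 < 0" by (rule mult_pos_neg[OF s50 s69])
    have t42: "b_m4_m3_m2_3_5 * b_m3_m2_m1_1_5 < 0" using gp13 t40 t41 by linarith
    have s91: "b_m3_m2_m1_1_5 < 0" by (rule pn1[OF t42 s55])
    have t43: "b_m5_m4_m2_m1_1 * b_m3_m2_m1_1_5 > 0" by (rule mult_neg_neg[OF s87 s91])
    have t44: "b_m5_m3_m2_m1_1 * b_m4_m2_m1_1_5 < 0" by (rule mult_pos_neg[OF s77 s51])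
    have t45: "b_m5_m2_m1_1_5 * b_m4_m3_m2_m1_1 < 0" using gp14 t43 t44 by linarith
    have s92: "b_m5_m2_m1_1_5 < 0" by (rule pn3[OF t45 s86])
    have t46: "b_m5_m4_m2_m1_3 * b_m3_m2_m1_3_4 > 0" by (rule mult_neg_neg[OF s62 s67])
    have t47: "b_m5_m3_m2_m1_3 * b_m4_m2_m1_3_4 < 0" by (rule mult_pos_neg[OF s72 s64])
    have t48: "b_m5_m2_m1_3_4 * b_m4_m3_m2_m1_3 < 0" using gp15 t46 t47 by linarith
    have s93: "b_m5_m2_m1_3_4 < 0" by (rule pn3[OF t48 s74])
    have t49: "b_m5_m3_m2_m1_4 * b_m2_m1_3_4_5 > 0" by (rule mult_pos_pos[OF s66 s49])
    have t50: "b_m5_m2_m1_3_4 * b_m3_m2_m1_4_5 < 0" by (rule mult_neg_pos[OF s93 s68])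
    have t51: "b_m5_m2_m1_4_5 * b_m3_m2_m1_3_4 < 0" using gp16 t49 t50 by linarith
    have s94: "b_m5_m2_m1_4_5 > 0" by (rule pn4[OF t51 s67])
    have t52: "b_m5_m3_1_2_4 * b_1_2_3_4_5 > 0" by (rule mult_neg_neg[OF cB s6])
    have t53: "b_m5_1_2_3_4 * b_m3_1_2_4_5 < 0" by (rule mult_pos_neg[OF s43 s13])
    have t54: "b_m5_1_2_4_5 * b_m3_1_2_3_4 < 0" using gp17 t52 t53 by linarith
    have s95: "b_m5_1_2_4_5 < 0" by (rule pn3[OF t54 s12])
    have t55: "b_m5_m4_1_2_5 * b_m2_1_2_3_5 > 0" by (rule mult_pos_pos[OF s80 s4])
    have t56: "b_m5_1_2_3_5 * b_m4_m2_1_2_5 > 0" by (rule mult_pos_pos[OF cA s52])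
    have t57: "b_m5_m2_1_2_5 * b_m4_1_2_3_5 > 0" using gp18 t55 t56 by linarith
    have s96: "b_m5_m2_1_2_5 > 0" by (rule pp3[OF t57 s2])
    have t58: "b_m5_m4_m3_m2_1 * b_m5_m4_m2_2_3 < 0" by (rule mult_neg_pos[OF s85 s90])
    have t59: "b_m5_m4_m3_m2_3 * b_m5_m4_m2_1_2 < 0" by (rule mult_neg_pos[OF s84 s89])
    have t60: "b_m5_m4_m3_m2_2 * b_m5_m4_m2_1_3 < 0" using gp19 t58 t59 by linarith
    have s97: "b_m5_m4_m3_m2_2 < 0" by (rule pn3[OF t60 s29])
    have t61: "b_m5_m4_m2_m1_1 * b_m5_m4_m2_2_3 < 0" by (rule mult_neg_pos[OF s87 s90])
    have t62: "b_m5_m4_m2_m1_3 * b_m5_m4_m2_1_2 < 0" by (rule mult_neg_pos[OF s62 s89])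
    have t63: "b_m5_m4_m2_m1_2 * b_m5_m4_m2_1_3 < 0" using gp20 t61 t62 by linarith
    have s98: "b_m5_m4_m2_m1_2 < 0" by (rule pn3[OF t63 s29])
    have t64: "b_m5_m4_m3_m2_2 * b_m5_m4_m1_2_4 < 0" by (rule mult_neg_pos[OF s97 s37])
    have t65: "b_m5_m4_m3_2_4 * b_m5_m4_m2_m1_2 < 0" by (rule mult_pos_neg[OF s83 s98])
    have t66: "b_m5_m4_m3_m1_2 * b_m5_m4_m2_2_4 < 0" using gp21 t64 t65 by linarith
    have s99: "b_m5_m4_m2_2_4 > 0" by (rule pn2[OF t66 s34])
    have t67: "b_m5_m4_m2_m1_1 * b_m5_m2_m1_4_5 < 0" by (rule mult_neg_pos[OF s87 s94])
    have t68: "b_m5_m4_m2_m1_4 * b_m5_m2_m1_1_5 > 0" by (rule mult_neg_neg[OF s88 s92])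
    have t69: "b_m5_m4_m2_m1_5 * b_m5_m2_m1_1_4 > 0" using gp22 t67 t68 by linarith
    have s100: "b_m5_m2_m1_1_4 < 0" by (rule pp2[OF t69 s78])
    have t70: "b_m5_m3_m2_m1_1 * b_m5_m2_m1_2_4 > 0" by (rule mult_pos_pos[OF s77 s38])
    have t71: "b_m5_m3_m2_m1_2 * b_m5_m2_m1_1_4 < 0" by (rule mult_pos_neg[OF s59 s100])
    have t72: "b_m5_m3_m2_m1_4 * b_m5_m2_m1_1_2 < 0" using gp23 t70 t71 by linarith
    have s101: "b_m5_m2_m1_1_2 < 0" by (rule pn1[OF t72 s66])
    have t73: "b_m5_m4_m2_1_2 * b_m5_m2_m1_2_4 > 0" by (rule mult_pos_pos[OF s89 s38])
    have t74: "b_m5_m4_m2_2_4 * b_m5_m2_m1_1_2 < 0" by (rule mult_pos_neg[OF s99 s101])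
    have t75: "b_m5_m4_m2_m1_2 * b_m5_m2_1_2_4 > 0" using gp24 t73 t74 by linarith
    have s102: "b_m5_m2_1_2_4 < 0" by (rule pp2[OF t75 s98])
    have t76: "b_m5_m4_m2_1_2 * b_m5_1_2_4_5 < 0" by (rule mult_pos_neg[OF s89 s95])
    have t77: "b_m5_m4_1_2_4 * b_m5_m2_1_2_5 > 0" by (rule mult_pos_pos[OF s79 s96])
    have t78: "b_m5_m4_1_2_5 * b_m5_m2_1_2_4 < 0" by (rule mult_pos_neg[OF s80 s102])
    show False using gp25 t76 t77 t78 by linarith
  qed
  have case1: False if cA: "b_m5_1_2_3_5 < 0" and cB: "b_m5_m3_1_2_4 > 0"
  proof -
    have s2: "b_m4_1_2_3_5 < 0" by (rule pp2[OF pf0 cA])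
    have s3: "b_m3_1_2_3_5 < 0" by (rule pp2[OF pf1 cA])
    have s4: "b_m2_1_2_3_5 < 0" by (rule pp2[OF pf2 cA])
    have s5: "b_m1_1_2_3_5 < 0" by (rule pp2[OF pf3 cA])
    have s6: "b_1_2_3_4_5 > 0" by (rule pn2[OF pf4 cA])
    have s7: "b_m5_m2_1_3_5 < 0" by (rule pp4[OF pf13 s4])
    have s8: "b_m2_1_3_4_5 > 0" by (rule pn2[OF pf14 s7])
    have s9: "b_m4_m3_1_2_4 > 0" by (rule pp1[OF pf25 cB])
    have s10: "b_m3_m2_1_2_4 < 0" by (rule pn1[OF pf26 cB])
    have s11: "b_m3_m1_1_2_4 < 0" by (rule pn1[OF pf27 cB])
    have s12: "b_m3_1_2_3_4 < 0" by (rule pn1[OF pf28 cB])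
    have s13: "b_m3_1_2_4_5 > 0" by (rule pp1[OF pf29 cB])
    have s14: "b_m5_m4_1_2_3 < 0" by (rule pp4[OF pf34 s2])
    have s15: "b_m5_m4_m3_1_2 < 0" by (rule pn3[OF pf48 cB])
    have s16: "b_m5_m3_1_2_5 > 0" by (rule pn2[OF pf49 s15])
    have s17: "b_m5_m3_m1_2_4 < 0" by (rule pp4[OF pf77 s11])
    have s18: "b_m3_m1_2_3_4 > 0" by (rule pn2[OF pf78 s17])
    have s19: "b_m3_m1_2_4_5 < 0" by (rule pp2[OF pf79 s17])
    have s20: "b_m4_m2_1_3_5 < 0" by (rule pp2[OF pf10 s7])
    have s21: "b_m3_m2_1_3_5 < 0" by (rule pp2[OF pf11 s7])
    have s22: "b_m2_m1_1_3_5 > 0" by (rule pn2[OF pf12 s7])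
    have s23: "b_m5_m4_m2_1_5 > 0" by (rule pn4[OF pf18 s20])
    have s24: "b_m4_m2_1_4_5 < 0" by (rule pn1[OF pf19 s23])
    have s25: "b_m4_m3_1_2_3 > 0" by (rule pn2[OF pf30 s14])
    have s26: "b_m4_m2_1_2_3 > 0" by (rule pn2[OF pf31 s14])
    have s27: "b_m4_m1_1_2_3 > 0" by (rule pn2[OF pf32 s14])
    have s28: "b_m4_1_2_3_4 < 0" by (rule pp2[OF pf33 s14])
    have s29: "b_m5_m4_m2_1_3 < 0" by (rule pn3[OF pf37 s26])
    have s30: "b_m4_m2_1_3_4 < 0" by (rule pp2[OF pf38 s29])
    have s31: "b_m5_m3_m2_1_2 > 0" by (rule pn2[OF pf45 s15])
    have s32: "b_m5_m3_m1_1_2 > 0" by (rule pn2[OF pf46 s15])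
    have s33: "b_m5_m3_1_2_3 > 0" by (rule pn2[OF pf47 s15])
    have s34: "b_m5_m4_m3_m1_2 > 0" by (rule pp3[OF pf51 s32])
    have s35: "b_m5_m3_m1_2_3 < 0" by (rule pn1[OF pf52 s34])
    have s36: "b_m5_m3_m1_2_5 < 0" by (rule pn1[OF pf54 s34])
    have s37: "b_m5_m4_m1_2_4 < 0" by (rule pp4[OF pf55 s17])
    have s38: "b_m5_m2_m1_2_4 < 0" by (rule pp2[OF pf56 s37])
    have s39: "b_m5_m1_1_2_4 > 0" by (rule pn2[OF pf57 s37])
    have s40: "b_m5_m1_2_3_4 < 0" by (rule pp2[OF pf58 s37])
    have s41: "b_m5_m1_2_4_5 > 0" by (rule pn2[OF pf59 s37])
    have s42: "b_m5_m4_2_3_4 < 0" by (rule pp4[OF pf62 s40])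
    have s43: "b_m5_1_2_3_4 < 0" by (rule pp2[OF pf63 s42])
    have s44: "b_m5_2_3_4_5 > 0" by (rule pn2[OF pf64 s42])
    have s45: "b_m4_m3_m1_2_4 < 0" by (rule pp2[OF pf75 s17])
    have s46: "b_m3_m2_m1_2_4 > 0" by (rule pn2[OF pf76 s17])
    have s47: "b_m5_m2_m1_3_5 > 0" by (rule pp3[OF pf7 s22])
    have s48: "b_m2_m1_2_3_5 > 0" by (rule pp1[OF pf8 s47])
    have s49: "b_m2_m1_3_4_5 < 0" by (rule pn1[OF pf9 s47])
    have s50: "b_m4_m3_m2_1_5 < 0" by (rule pn1[OF pf15 s23])
    have s51: "b_m4_m2_m1_1_5 > 0" by (rule pp1[OF pf16 s23])
    have s52: "b_m4_m2_1_2_5 < 0" by (rule pn1[OF pf17 s23])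
    have s53: "b_m5_m4_m3_m2_5 > 0" by (rule pn4[OF pf21 s50])
    have s54: "b_m4_m3_m2_2_5 < 0" by (rule pn1[OF pf22 s53])
    have s55: "b_m4_m3_m2_3_5 < 0" by (rule pn1[OF pf23 s53])
    have s56: "b_m4_m3_m2_4_5 < 0" by (rule pn1[OF pf24 s53])
    have s57: "b_m4_m3_m2_1_3 > 0" by (rule pn2[OF pf35 s29])
    have s58: "b_m4_m2_m1_1_3 < 0" by (rule pp2[OF pf36 s29])
    have s59: "b_m5_m3_m2_m1_2 < 0" by (rule pn1[OF pf50 s34])
    have s60: "b_m5_m3_2_3_4 < 0" by (rule pp2[OF pf60 s42])
    have s61: "b_m5_m2_2_3_4 < 0" by (rule pp2[OF pf61 s42])
    have s62: "b_m5_m4_m2_m1_3 > 0" by (rule pn4[OF pf66 s58])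
    have s63: "b_m4_m2_m1_2_3 < 0" by (rule pn1[OF pf67 s62])
    have s64: "b_m4_m2_m1_3_4 > 0" by (rule pp1[OF pf68 s62])
    have s65: "b_m4_m2_m1_3_5 > 0" by (rule pp1[OF pf69 s62])
    have s66: "b_m5_m3_m2_m1_4 < 0" by (rule pn3[OF pf72 s46])
    have s67: "b_m3_m2_m1_3_4 > 0" by (rule pn2[OF pf73 s66])
    have s68: "b_m3_m2_m1_4_5 < 0" by (rule pp2[OF pf74 s66])
    have s69: "b_m3_m2_m1_3_5 > 0" by (rule pp1[OF pf6 s47])
    have s70: "b_m4_m3_m2_m1_5 < 0" by (rule pn1[OF pf20 s53])
    have s71: "b_m5_m4_m3_m2_m1 > 0" by (rule pn4[OF pf41 s59])
    have s72: "b_m5_m3_m2_m1_3 < 0" by (rule pn1[OF pf42 s71])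
    have s73: "b_m5_m3_m2_m1_5 < 0" by (rule pn1[OF pf44 s71])
    have s74: "b_m4_m3_m2_m1_3 < 0" by (rule pn1[OF pf65 s62])
    have s75: "b_m4_m3_m2_m1_4 < 0" by (rule pp2[OF pf70 s66])
    have s76: "b_m3_m2_m1_1_4 > 0" by (rule pn2[OF pf71 s66])
    have s77: "b_m5_m3_m2_m1_1 < 0" by (rule pn1[OF pf40 s71])
    have t1: "b_m5_m4_m3_m2_m1 * b_m5_m2_m1_3_5 > 0" by (rule mult_pos_pos[OF s71 s47])
    have t2: "b_m5_m4_m2_m1_3 * b_m5_m3_m2_m1_5 < 0" by (rule mult_pos_neg[OF s62 s73])
    have t3: "b_m5_m4_m2_m1_5 * b_m5_m3_m2_m1_3 < 0" using gp0 t1 t2 by linarith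
    have s78: "b_m5_m4_m2_m1_5 > 0" by (rule pn4[OF t3 s72])
    have t4: "b_m5_m4_m3_1_2 * b_m5_1_2_3_4 > 0" by (rule mult_neg_neg[OF s15 s43])
    have t5: "b_m5_m4_1_2_3 * b_m5_m3_1_2_4 < 0" by (rule mult_neg_pos[OF s14 cB])
    have t6: "b_m5_m4_1_2_4 * b_m5_m3_1_2_3 < 0" using gp1 t4 t5 by linarith
    have s79: "b_m5_m4_1_2_4 < 0" by (rule pn3[OF t6 s33])
    have t7: "b_m5_m4_m3_1_2 * b_m5_1_2_3_5 > 0" by (rule mult_neg_neg[OF s15 cA])
    have t8: "b_m5_m4_1_2_3 * b_m5_m3_1_2_5 < 0" by (rule mult_neg_pos[OF s14 s16])
    have t9: "b_m5_m4_1_2_5 * b_m5_m3_1_2_3 < 0" using gp2 t7 t8 by linarith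
    have s80: "b_m5_m4_1_2_5 < 0" by (rule pn3[OF t9 s33])
    have t10: "b_m5_m3_m1_1_2 * b_m5_1_2_3_4 < 0" by (rule mult_pos_neg[OF s32 s43])
    have t11: "b_m5_m3_1_2_3 * b_m5_m1_1_2_4 > 0" by (rule mult_pos_pos[OF s33 s39])
    have t12: "b_m5_m3_1_2_4 * b_m5_m1_1_2_3 > 0" using gp3 t10 t11 by linarith
    have s81: "b_m5_m1_1_2_3 > 0" by (rule pp1[OF t12 cB])
    have t13: "b_m5_m4_1_2_3 * b_m5_m1_2_3_4 > 0" by (rule mult_neg_neg[OF s14 s40])
    have t14: "b_m5_m4_2_3_4 * b_m5_m1_1_2_3 < 0" by (rule mult_neg_pos[OF s42 s81])
    have t15: "b_m5_m4_m1_2_3 * b_m5_1_2_3_4 > 0" using gp4 t13 t14 by linarith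
    have s82: "b_m5_m4_m1_2_3 < 0" by (rule pp4[OF t15 s43])
    have t16: "b_m5_m4_m1_2_4 * b_m5_m3_1_2_4 < 0" by (rule mult_neg_pos[OF s37 cB])
    have t17: "b_m5_m4_1_2_4 * b_m5_m3_m1_2_4 > 0" by (rule mult_neg_neg[OF s79 s17])
    have t18: "b_m5_m4_m3_2_4 * b_m5_m1_1_2_4 < 0" using gp5 t16 t17 by linarith
    have s83: "b_m5_m4_m3_2_4 < 0" by (rule pn3[OF t18 s39])
    have t19: "b_m5_m4_m3_m2_m1 * b_m4_m3_m2_3_5 < 0" by (rule mult_pos_neg[OF s71 s55])
    have t20: "b_m5_m4_m3_m2_5 * b_m4_m3_m2_m1_3 < 0" by (rule mult_pos_neg[OF s53 s74])
    have t21: "b_m5_m4_m3_m2_3 * b_m4_m3_m2_m1_5 < 0" using gp6 t19 t20 by linarith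
    have s84: "b_m5_m4_m3_m2_3 > 0" by (rule pn4[OF t21 s70])
    have t22: "b_m5_m4_m3_m2_3 * b_m4_m3_m2_1_5 < 0" by (rule mult_pos_neg[OF s84 s50])
    have t23: "b_m5_m4_m3_m2_5 * b_m4_m3_m2_1_3 > 0" by (rule mult_pos_pos[OF s53 s57])
    have t24: "b_m5_m4_m3_m2_1 * b_m4_m3_m2_3_5 < 0" using gp7 t22 t23 by linarith
    have s85: "b_m5_m4_m3_m2_1 > 0" by (rule pn4[OF t24 s55])
    have t25: "b_m4_m3_m2_m1_3 * b_m4_m3_m2_1_5 > 0" by (rule mult_neg_neg[OF s74 s50])
    have t26: "b_m4_m3_m2_m1_5 * b_m4_m3_m2_1_3 < 0" by (rule mult_neg_pos[OF s70 s57])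
    have t27: "b_m4_m3_m2_m1_1 * b_m4_m3_m2_3_5 > 0" using gp8 t25 t26 by linarith
    have s86: "b_m4_m3_m2_m1_1 < 0" by (rule pp4[OF t27 s55])
    have t28: "b_m5_m4_m3_m2_m1 * b_m4_m2_m1_1_3 < 0" by (rule mult_pos_neg[OF s71 s58])
    have t29: "b_m5_m4_m2_m1_3 * b_m4_m3_m2_m1_1 < 0" by (rule mult_pos_neg[OF s62 s86])
    have t30: "b_m5_m4_m2_m1_1 * b_m4_m3_m2_m1_3 < 0" using gp9 t28 t29 by linarith
    have s87: "b_m5_m4_m2_m1_1 > 0" by (rule pn4[OF t30 s74])
    have t31: "b_m5_m4_m3_m2_m1 * b_m4_m2_m1_3_4 > 0" by (rule mult_pos_pos[OF s71 s64])
    have t32: "b_m5_m4_m2_m1_3 * b_m4_m3_m2_m1_4 < 0" by (rule mult_pos_neg[OF s62 s75])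
    have t33: "b_m5_m4_m2_m1_4 * b_m4_m3_m2_m1_3 < 0" using gp10 t31 t32 by linarith
    have s88: "b_m5_m4_m2_m1_4 > 0" by (rule pn4[OF t33 s74])
    have t34: "b_m5_m4_1_2_3 * b_m4_m2_1_2_5 > 0" by (rule mult_neg_neg[OF s14 s52])
    have t35: "b_m5_m4_1_2_5 * b_m4_m2_1_2_3 < 0" by (rule mult_neg_pos[OF s80 s26])
    have t36: "b_m5_m4_m2_1_2 * b_m4_1_2_3_5 > 0" using gp11 t34 t35 by linarith
    have s89: "b_m5_m4_m2_1_2 < 0" by (rule pp4[OF t36 s2])
    have t37: "b_m5_m4_m1_2_3 * b_m4_m2_1_2_3 < 0" by (rule mult_neg_pos[OF s82 s26])
    have t38: "b_m5_m4_1_2_3 * b_m4_m2_m1_2_3 > 0" by (rule mult_neg_neg[OF s14 s63])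
    have t39: "b_m5_m4_m2_2_3 * b_m4_m1_1_2_3 < 0" using gp12 t37 t38 by linarith
    have s90: "b_m5_m4_m2_2_3 < 0" by (rule pn3[OF t39 s27])
    have t40: "b_m4_m3_m2_m1_5 * b_m3_m2_1_3_5 > 0" by (rule mult_neg_neg[OF s70 s21])
    have t41: "b_m4_m3_m2_1_5 * b_m3_m2_m1_3_5 < 0" by (rule mult_neg_pos[OF s50 s69])
    have t42: "b_m4_m3_m2_3_5 * b_m3_m2_m1_1_5 < 0" using gp13 t40 t41 by linarith
    have s91: "b_m3_m2_m1_1_5 > 0" by (rule pn2[OF t42 s55])
    have t43: "b_m5_m4_m2_m1_1 * b_m3_m2_m1_1_5 > 0" by (rule mult_pos_pos[OF s87 s91])
    have t44: "b_m5_m3_m2_m1_1 * b_m4_m2_m1_1_5 < 0" by (rule mult_neg_pos[OF s77 s51])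
    have t45: "b_m5_m2_m1_1_5 * b_m4_m3_m2_m1_1 < 0" using gp14 t43 t44 by linarith
    have s92: "b_m5_m2_m1_1_5 > 0" by (rule pn4[OF t45 s86])
    have t46: "b_m5_m4_m2_m1_3 * b_m3_m2_m1_3_4 > 0" by (rule mult_pos_pos[OF s62 s67])
    have t47: "b_m5_m3_m2_m1_3 * b_m4_m2_m1_3_4 < 0" by (rule mult_neg_pos[OF s72 s64])
    have t48: "b_m5_m2_m1_3_4 * b_m4_m3_m2_m1_3 < 0" using gp15 t46 t47 by linarith
    have s93: "b_m5_m2_m1_3_4 > 0" by (rule pn4[OF t48 s74])
    have t49: "b_m5_m3_m2_m1_4 * b_m2_m1_3_4_5 > 0" by (rule mult_neg_neg[OF s66 s49])
    have t50: "b_m5_m2_m1_3_4 * b_m3_m2_m1_4_5 < 0" by (rule mult_pos_neg[OF s93 s68])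
    have t51: "b_m5_m2_m1_4_5 * b_m3_m2_m1_3_4 < 0" using gp16 t49 t50 by linarith
    have s94: "b_m5_m2_m1_4_5 < 0" by (rule pn3[OF t51 s67])
    have t52: "b_m5_m3_1_2_4 * b_1_2_3_4_5 > 0" by (rule mult_pos_pos[OF cB s6])
    have t53: "b_m5_1_2_3_4 * b_m3_1_2_4_5 < 0" by (rule mult_neg_pos[OF s43 s13])
    have t54: "b_m5_1_2_4_5 * b_m3_1_2_3_4 < 0" using gp17 t52 t53 by linarith
    have s95: "b_m5_1_2_4_5 > 0" by (rule pn4[OF t54 s12])
    have t55: "b_m5_m4_1_2_5 * b_m2_1_2_3_5 > 0" by (rule mult_neg_neg[OF s80 s4])
    have t56: "b_m5_1_2_3_5 * b_m4_m2_1_2_5 > 0" by (rule mult_neg_neg[OF cA s52])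
    have t57: "b_m5_m2_1_2_5 * b_m4_1_2_3_5 > 0" using gp18 t55 t56 by linarith
    have s96: "b_m5_m2_1_2_5 < 0" by (rule pp4[OF t57 s2])
    have t58: "b_m5_m4_m3_m2_1 * b_m5_m4_m2_2_3 < 0" by (rule mult_pos_neg[OF s85 s90])
    have t59: "b_m5_m4_m3_m2_3 * b_m5_m4_m2_1_2 < 0" by (rule mult_pos_neg[OF s84 s89])
    have t60: "b_m5_m4_m3_m2_2 * b_m5_m4_m2_1_3 < 0" using gp19 t58 t59 by linarith
    have s97: "b_m5_m4_m3_m2_2 > 0" by (rule pn4[OF t60 s29])
    have t61: "b_m5_m4_m2_m1_1 * b_m5_m4_m2_2_3 < 0" by (rule mult_pos_neg[OF s87 s90])
    have t62: "b_m5_m4_m2_m1_3 * b_m5_m4_m2_1_2 < 0" by (rule mult_pos_neg[OF s62 s89])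
    have t63: "b_m5_m4_m2_m1_2 * b_m5_m4_m2_1_3 < 0" using gp20 t61 t62 by linarith
    have s98: "b_m5_m4_m2_m1_2 > 0" by (rule pn4[OF t63 s29])
    have t64: "b_m5_m4_m3_m2_2 * b_m5_m4_m1_2_4 < 0" by (rule mult_pos_neg[OF s97 s37])
    have t65: "b_m5_m4_m3_2_4 * b_m5_m4_m2_m1_2 < 0" by (rule mult_neg_pos[OF s83 s98])
    have t66: "b_m5_m4_m3_m1_2 * b_m5_m4_m2_2_4 < 0" using gp21 t64 t65 by linarith
    have s99: "b_m5_m4_m2_2_4 < 0" by (rule pn1[OF t66 s34])
    have t67: "b_m5_m4_m2_m1_1 * b_m5_m2_m1_4_5 < 0" by (rule mult_pos_neg[OF s87 s94])
    have t68: "b_m5_m4_m2_m1_4 * b_m5_m2_m1_1_5 > 0" by (rule mult_pos_pos[OF s88 s92])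
    have t69: "b_m5_m4_m2_m1_5 * b_m5_m2_m1_1_4 > 0" using gp22 t67 t68 by linarith
    have s100: "b_m5_m2_m1_1_4 > 0" by (rule pp1[OF t69 s78])
    have t70: "b_m5_m3_m2_m1_1 * b_m5_m2_m1_2_4 > 0" by (rule mult_neg_neg[OF s77 s38])
    have t71: "b_m5_m3_m2_m1_2 * b_m5_m2_m1_1_4 < 0" by (rule mult_neg_pos[OF s59 s100])
    have t72: "b_m5_m3_m2_m1_4 * b_m5_m2_m1_1_2 < 0" using gp23 t70 t71 by linarith
    have s101: "b_m5_m2_m1_1_2 > 0" by (rule pn2[OF t72 s66])
    have t73: "b_m5_m4_m2_1_2 * b_m5_m2_m1_2_4 > 0" by (rule mult_neg_neg[OF s89 s38])
    have t74: "b_m5_m4_m2_2_4 * b_m5_m2_m1_1_2 < 0" by (rule mult_neg_pos[OF s99 s101])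
    have t75: "b_m5_m4_m2_m1_2 * b_m5_m2_1_2_4 > 0" using gp24 t73 t74 by linarith
    have s102: "b_m5_m2_1_2_4 > 0" by (rule pp1[OF t75 s98])
    have t76: "b_m5_m4_m2_1_2 * b_m5_1_2_4_5 < 0" by (rule mult_neg_pos[OF s89 s95])
    have t77: "b_m5_m4_1_2_4 * b_m5_m2_1_2_5 > 0" by (rule mult_neg_neg[OF s79 s96])
    have t78: "b_m5_m4_1_2_5 * b_m5_m2_1_2_4 < 0" by (rule mult_neg_pos[OF s80 s102])
    show False using gp25 t76 t77 t78 by linarith
  qed
  have case2: False if cA: "b_m5_1_2_3_5 > 0" and cB: "b_m5_m3_1_2_4 > 0"
  proof -
    have s2: "b_m4_1_2_3_5 > 0" by (rule pp1[OF pf0 cA])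
    have s3: "b_m3_1_2_3_5 > 0" by (rule pp1[OF pf1 cA])
    have s4: "b_m2_1_2_3_5 > 0" by (rule pp1[OF pf2 cA])
    have s5: "b_m1_1_2_3_5 > 0" by (rule pp1[OF pf3 cA])
    have s6: "b_1_2_3_4_5 < 0" by (rule pn1[OF pf4 cA])
    have s7: "b_m5_m2_1_3_5 > 0" by (rule pp3[OF pf13 s4])
    have s8: "b_m2_1_3_4_5 < 0" by (rule pn1[OF pf14 s7])
    have s9: "b_m4_m3_1_2_4 > 0" by (rule pp1[OF pf25 cB])
    have s10: "b_m3_m2_1_2_4 < 0" by (rule pn1[OF pf26 cB])
    have s11: "b_m3_m1_1_2_4 < 0" by (rule pn1[OF pf27 cB])
    have s12: "b_m3_1_2_3_4 < 0" by (rule pn1[OF pf28 cB])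
    have s13: "b_m3_1_2_4_5 > 0" by (rule pp1[OF pf29 cB])
    have s14: "b_m5_m4_1_2_3 > 0" by (rule pp3[OF pf34 s2])
    have s15: "b_m5_m4_m3_1_2 < 0" by (rule pn3[OF pf48 cB])
    have s16: "b_m5_m3_1_2_5 > 0" by (rule pn2[OF pf49 s15])
    have s17: "b_m5_m3_m1_2_4 < 0" by (rule pp4[OF pf77 s11])
    have s18: "b_m3_m1_2_3_4 > 0" by (rule pn2[OF pf78 s17])
    have s19: "b_m3_m1_2_4_5 < 0" by (rule pp2[OF pf79 s17])
    have s20: "b_m4_m2_1_3_5 > 0" by (rule pp1[OF pf10 s7])
    have s21: "b_m3_m2_1_3_5 > 0" by (rule pp1[OF pf11 s7])
    have s22: "b_m2_m1_1_3_5 < 0" by (rule pn1[OF pf12 s7])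
    have s23: "b_m5_m4_m2_1_5 < 0" by (rule pn3[OF pf18 s20])
    have s24: "b_m4_m2_1_4_5 > 0" by (rule pn2[OF pf19 s23])
    have s25: "b_m4_m3_1_2_3 < 0" by (rule pn1[OF pf30 s14])
    have s26: "b_m4_m2_1_2_3 < 0" by (rule pn1[OF pf31 s14])
    have s27: "b_m4_m1_1_2_3 < 0" by (rule pn1[OF pf32 s14])
    have s28: "b_m4_1_2_3_4 > 0" by (rule pp1[OF pf33 s14])
    have s29: "b_m5_m4_m2_1_3 > 0" by (rule pn4[OF pf37 s26])
    have s30: "b_m4_m2_1_3_4 > 0" by (rule pp1[OF pf38 s29])
    have s31: "b_m5_m3_m2_1_2 > 0" by (rule pn2[OF pf45 s15])
    have s32: "b_m5_m3_m1_1_2 > 0" by (rule pn2[OF pf46 s15])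
    have s33: "b_m5_m3_1_2_3 > 0" by (rule pn2[OF pf47 s15])
    have s34: "b_m5_m4_m3_m1_2 > 0" by (rule pp3[OF pf51 s32])
    have s35: "b_m5_m3_m1_2_3 < 0" by (rule pn1[OF pf52 s34])
    have s36: "b_m5_m3_m1_2_5 < 0" by (rule pn1[OF pf54 s34])
    have s37: "b_m5_m4_m1_2_4 < 0" by (rule pp4[OF pf55 s17])
    have s38: "b_m5_m2_m1_2_4 < 0" by (rule pp2[OF pf56 s37])
    have s39: "b_m5_m1_1_2_4 > 0" by (rule pn2[OF pf57 s37])
    have s40: "b_m5_m1_2_3_4 < 0" by (rule pp2[OF pf58 s37])
    have s41: "b_m5_m1_2_4_5 > 0" by (rule pn2[OF pf59 s37])
    have s42: "b_m5_m4_2_3_4 < 0" by (rule pp4[OF pf62 s40])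
    have s43: "b_m5_1_2_3_4 < 0" by (rule pp2[OF pf63 s42])
    have s44: "b_m5_2_3_4_5 > 0" by (rule pn2[OF pf64 s42])
    have s45: "b_m4_m3_m1_2_4 < 0" by (rule pp2[OF pf75 s17])
    have s46: "b_m3_m2_m1_2_4 > 0" by (rule pn2[OF pf76 s17])
    have s47: "b_m5_m2_m1_3_5 < 0" by (rule pp4[OF pf7 s22])
    have s48: "b_m2_m1_2_3_5 < 0" by (rule pp2[OF pf8 s47])
    have s49: "b_m2_m1_3_4_5 > 0" by (rule pn2[OF pf9 s47])
    have s50: "b_m4_m3_m2_1_5 > 0" by (rule pn2[OF pf15 s23])
    have s51: "b_m4_m2_m1_1_5 < 0" by (rule pp2[OF pf16 s23])
    have s52: "b_m4_m2_1_2_5 > 0" by (rule pn2[OF pf17 s23])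
    have s53: "b_m5_m4_m3_m2_5 < 0" by (rule pn3[OF pf21 s50])
    have s54: "b_m4_m3_m2_2_5 > 0" by (rule pn2[OF pf22 s53])
    have s55: "b_m4_m3_m2_3_5 > 0" by (rule pn2[OF pf23 s53])
    have s56: "b_m4_m3_m2_4_5 > 0" by (rule pn2[OF pf24 s53])
    have s57: "b_m4_m3_m2_1_3 < 0" by (rule pn1[OF pf35 s29])
    have s58: "b_m4_m2_m1_1_3 > 0" by (rule pp1[OF pf36 s29])
    have s59: "b_m5_m3_m2_m1_2 < 0" by (rule pn1[OF pf50 s34])
    have s60: "b_m5_m3_2_3_4 < 0" by (rule pp2[OF pf60 s42])
    have s61: "b_m5_m2_2_3_4 < 0" by (rule pp2[OF pf61 s42])
    have s62: "b_m5_m4_m2_m1_3 < 0" by (rule pn3[OF pf66 s58])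
    have s63: "b_m4_m2_m1_2_3 > 0" by (rule pn2[OF pf67 s62])
    have s64: "b_m4_m2_m1_3_4 < 0" by (rule pp2[OF pf68 s62])
    have s65: "b_m4_m2_m1_3_5 < 0" by (rule pp2[OF pf69 s62])
    have s66: "b_m5_m3_m2_m1_4 < 0" by (rule pn3[OF pf72 s46])
    have s67: "b_m3_m2_m1_3_4 > 0" by (rule pn2[OF pf73 s66])
    have s68: "b_m3_m2_m1_4_5 < 0" by (rule pp2[OF pf74 s66])
    have s69: "b_m3_m2_m1_3_5 < 0" by (rule pp2[OF pf6 s47])
    have s70: "b_m4_m3_m2_m1_5 > 0" by (rule pn2[OF pf20 s53])
    have s71: "b_m5_m4_m3_m2_m1 > 0" by (rule pn4[OF pf41 s59])
    have s72: "b_m5_m3_m2_m1_3 < 0" by (rule pn1[OF pf42 s71])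
    have s73: "b_m5_m3_m2_m1_5 < 0" by (rule pn1[OF pf44 s71])
    have s74: "b_m4_m3_m2_m1_3 > 0" by (rule pn2[OF pf65 s62])
    have s75: "b_m4_m3_m2_m1_4 < 0" by (rule pp2[OF pf70 s66])
    have s76: "b_m3_m2_m1_1_4 > 0" by (rule pn2[OF pf71 s66])
    have s77: "b_m5_m3_m2_m1_1 < 0" by (rule pn1[OF pf40 s71])
    have t1: "b_m5_m4_m3_m2_m1 * b_m5_m2_m1_3_5 < 0" by (rule mult_pos_neg[OF s71 s47])
    have t2: "b_m5_m4_m2_m1_3 * b_m5_m3_m2_m1_5 > 0" by (rule mult_neg_neg[OF s62 s73])
    have t3: "b_m5_m4_m2_m1_5 * b_m5_m3_m2_m1_3 > 0" using gp0 t1 t2 by linarith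
    have s78: "b_m5_m4_m2_m1_5 < 0" by (rule pp4[OF t3 s72])
    have t4: "b_m5_m4_m3_1_2 * b_m5_1_2_3_5 < 0" by (rule mult_neg_pos[OF s15 cA])
    have t5: "b_m5_m4_1_2_3 * b_m5_m3_1_2_5 > 0" by (rule mult_pos_pos[OF s14 s16])
    have t6: "b_m5_m4_1_2_5 * b_m5_m3_1_2_3 > 0" using gp2 t4 t5 by linarith
    have s79: "b_m5_m4_1_2_5 > 0" by (rule pp3[OF t6 s33])
    have t7: "b_m4_m3_m2_m1_3 * b_m4_m3_m2_1_5 > 0" by (rule mult_pos_pos[OF s74 s50])
    have t8: "b_m4_m3_m2_m1_5 * b_m4_m3_m2_1_3 < 0" by (rule mult_pos_neg[OF s70 s57])
    have t9: "b_m4_m3_m2_m1_1 * b_m4_m3_m2_3_5 > 0" using gp8 t7 t8 by linarith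
    have s80: "b_m4_m3_m2_m1_1 > 0" by (rule pp3[OF t9 s55])
    have t10: "b_m5_m4_m3_m2_m1 * b_m4_m2_m1_1_5 < 0" by (rule mult_pos_neg[OF s71 s51])
    have t11: "b_m5_m4_m2_m1_5 * b_m4_m3_m2_m1_1 < 0" by (rule mult_neg_pos[OF s78 s80])
    have t12: "b_m5_m4_m2_m1_1 * b_m4_m3_m2_m1_5 < 0" using gp26 t10 t11 by linarith
    have s81: "b_m5_m4_m2_m1_1 < 0" by (rule pn3[OF t12 s70])
    have t13: "b_m5_m4_m3_m2_m1 * b_m4_m2_m1_3_4 < 0" by (rule mult_pos_neg[OF s71 s64])
    have t14: "b_m5_m4_m2_m1_3 * b_m4_m3_m2_m1_4 > 0" by (rule mult_neg_neg[OF s62 s75])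
    have t15: "b_m5_m4_m2_m1_4 * b_m4_m3_m2_m1_3 > 0" using gp10 t13 t14 by linarith
    have s82: "b_m5_m4_m2_m1_4 > 0" by (rule pp3[OF t15 s74])
    have t16: "b_m5_m4_m2_m1_1 * b_m4_m2_m1_3_4 > 0" by (rule mult_neg_neg[OF s81 s64])
    have t17: "b_m5_m4_m2_m1_4 * b_m4_m2_m1_1_3 > 0" by (rule mult_pos_pos[OF s82 s58])
    have t18: "b_m5_m4_m2_m1_3 * b_m4_m2_m1_1_4 > 0" using gp27 t16 t17 by linarith
    have s83: "b_m4_m2_m1_1_4 < 0" by (rule pp2[OF t18 s62])
    have t19: "b_m5_m4_m3_1_2 * b_m4_1_2_3_4 < 0" by (rule mult_neg_pos[OF s15 s28])
    have t20: "b_m5_m4_1_2_3 * b_m4_m3_1_2_4 > 0" by (rule mult_pos_pos[OF s14 s9])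
    have t21: "b_m5_m4_1_2_4 * b_m4_m3_1_2_3 > 0" using gp28 t19 t20 by linarith
    have s84: "b_m5_m4_1_2_4 < 0" by (rule pp4[OF t21 s25])
    have t22: "b_m5_m4_m3_1_2 * b_m4_1_2_3_5 < 0" by (rule mult_neg_pos[OF s15 s2])
    have t23: "b_m5_m4_1_2_5 * b_m4_m3_1_2_3 < 0" by (rule mult_pos_neg[OF s79 s25])
    have t24: "b_m5_m4_1_2_3 * b_m4_m3_1_2_5 < 0" using gp29 t22 t23 by linarith
    have s85: "b_m4_m3_1_2_5 < 0" by (rule pn1[OF t24 s14])
    have t25: "b_m5_m4_1_2_3 * b_m4_m2_1_2_5 > 0" by (rule mult_pos_pos[OF s14 s52])
    have t26: "b_m5_m4_1_2_5 * b_m4_m2_1_2_3 < 0" by (rule mult_pos_neg[OF s79 s26])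
    have t27: "b_m5_m4_m2_1_2 * b_m4_1_2_3_5 > 0" using gp11 t25 t26 by linarith
    have s86: "b_m5_m4_m2_1_2 > 0" by (rule pp3[OF t27 s2])
    have t28: "b_m5_m4_1_2_4 * b_m4_1_2_3_5 < 0" by (rule mult_neg_pos[OF s84 s2])
    have t29: "b_m5_m4_1_2_5 * b_m4_1_2_3_4 > 0" by (rule mult_pos_pos[OF s79 s28])
    have t30: "b_m5_m4_1_2_3 * b_m4_1_2_4_5 < 0" using gp30 t28 t29 by linarith
    have s87: "b_m4_1_2_4_5 < 0" by (rule pn1[OF t30 s14])
    have t31: "b_m4_m3_1_2_3 * b_m4_m2_1_2_5 < 0" by (rule mult_neg_pos[OF s25 s52])
    have t32: "b_m4_m3_1_2_5 * b_m4_m2_1_2_3 > 0" by (rule mult_neg_neg[OF s85 s26])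
    have t33: "b_m4_m3_m2_1_2 * b_m4_1_2_3_5 < 0" using gp31 t31 t32 by linarith
    have s88: "b_m4_m3_m2_1_2 < 0" by (rule pn3[OF t33 s2])
    have t34: "b_m4_m2_1_2_3 * b_m4_1_2_4_5 > 0" by (rule mult_neg_neg[OF s26 s87])
    have t35: "b_m4_m2_1_2_5 * b_m4_1_2_3_4 > 0" by (rule mult_pos_pos[OF s52 s28])
    have t36: "b_m4_m2_1_2_4 * b_m4_1_2_3_5 > 0" using gp32 t34 t35 by linarith
    have s89: "b_m4_m2_1_2_4 > 0" by (rule pp3[OF t36 s2])
    have t37: "b_m5_m4_m2_m1_1 * b_m3_m2_m1_1_4 < 0" by (rule mult_neg_pos[OF s81 s76])
    have t38: "b_m5_m3_m2_m1_1 * b_m4_m2_m1_1_4 > 0" by (rule mult_neg_neg[OF s77 s83])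
    have t39: "b_m5_m2_m1_1_4 * b_m4_m3_m2_m1_1 > 0" using gp33 t37 t38 by linarith
    have s90: "b_m5_m2_m1_1_4 > 0" by (rule pp3[OF t39 s80])
    have t40: "b_m5_m4_m2_m1_4 * b_m3_m2_m1_2_4 > 0" by (rule mult_pos_pos[OF s82 s46])
    have t41: "b_m5_m2_m1_2_4 * b_m4_m3_m2_m1_4 > 0" by (rule mult_neg_neg[OF s38 s75])
    have t42: "b_m5_m3_m2_m1_4 * b_m4_m2_m1_2_4 > 0" using gp34 t40 t41 by linarith
    have s91: "b_m4_m2_m1_2_4 < 0" by (rule pp2[OF t42 s66])
    have t43: "b_m5_m2_m1_1_4 * b_m4_m2_m1_2_4 < 0" by (rule mult_pos_neg[OF s90 s91])
    have t44: "b_m5_m2_m1_2_4 * b_m4_m2_m1_1_4 > 0" by (rule mult_neg_neg[OF s38 s83])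
    have t45: "b_m5_m4_m2_m1_4 * b_m2_m1_1_2_4 < 0" using gp35 t43 t44 by linarith
    have s92: "b_m2_m1_1_2_4 < 0" by (rule pn1[OF t45 s82])
    have t46: "b_m5_m4_m2_1_2 * b_m3_m2_1_2_4 < 0" by (rule mult_pos_neg[OF s86 s10])
    have t47: "b_m5_m3_m2_1_2 * b_m4_m2_1_2_4 > 0" by (rule mult_pos_pos[OF s31 s89])
    have t48: "b_m5_m2_1_2_4 * b_m4_m3_m2_1_2 > 0" using gp36 t46 t47 by linarith
    have s93: "b_m5_m2_1_2_4 < 0" by (rule pp4[OF t48 s88])
    have t49: "b_m5_m4_1_2_4 * b_m3_m1_1_2_4 > 0" by (rule mult_neg_neg[OF s84 s11])
    have t50: "b_m5_m1_1_2_4 * b_m4_m3_1_2_4 > 0" by (rule mult_pos_pos[OF s39 s9])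
    have t51: "b_m5_m3_1_2_4 * b_m4_m1_1_2_4 > 0" using gp37 t49 t50 by linarith
    have s94: "b_m4_m1_1_2_4 > 0" by (rule pp1[OF t51 cB])
    have t52: "b_m5_m4_1_2_4 * b_m2_m1_1_2_4 > 0" by (rule mult_neg_neg[OF s84 s92])
    have t53: "b_m5_m2_1_2_4 * b_m4_m1_1_2_4 < 0" by (rule mult_neg_pos[OF s93 s94])
    have t54: "b_m5_m1_1_2_4 * b_m4_m2_1_2_4 > 0" by (rule mult_pos_pos[OF s39 s89])
    show False using gp38 t52 t53 t54 by linarith
  qed
  have case3: False if cA: "b_m5_1_2_3_5 < 0" and cB: "b_m5_m3_1_2_4 < 0"
  proof -
    have s2: "b_m4_1_2_3_5 < 0" by (rule pp2[OF pf0 cA])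
    have s3: "b_m3_1_2_3_5 < 0" by (rule pp2[OF pf1 cA])
    have s4: "b_m2_1_2_3_5 < 0" by (rule pp2[OF pf2 cA])
    have s5: "b_m1_1_2_3_5 < 0" by (rule pp2[OF pf3 cA])
    have s6: "b_1_2_3_4_5 > 0" by (rule pn2[OF pf4 cA])
    have s7: "b_m5_m2_1_3_5 < 0" by (rule pp4[OF pf13 s4])
    have s8: "b_m2_1_3_4_5 > 0" by (rule pn2[OF pf14 s7])
    have s9: "b_m4_m3_1_2_4 < 0" by (rule pp2[OF pf25 cB])
    have s10: "b_m3_m2_1_2_4 > 0" by (rule pn2[OF pf26 cB])
    have s11: "b_m3_m1_1_2_4 > 0" by (rule pn2[OF pf27 cB])
    have s12: "b_m3_1_2_3_4 > 0" by (rule pn2[OF pf28 cB])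
    have s13: "b_m3_1_2_4_5 < 0" by (rule pp2[OF pf29 cB])
    have s14: "b_m5_m4_1_2_3 < 0" by (rule pp4[OF pf34 s2])
    have s15: "b_m5_m4_m3_1_2 > 0" by (rule pn4[OF pf48 cB])
    have s16: "b_m5_m3_1_2_5 < 0" by (rule pn1[OF pf49 s15])
    have s17: "b_m5_m3_m1_2_4 > 0" by (rule pp3[OF pf77 s11])
    have s18: "b_m3_m1_2_3_4 < 0" by (rule pn1[OF pf78 s17])
    have s19: "b_m3_m1_2_4_5 > 0" by (rule pp1[OF pf79 s17])
    have s20: "b_m4_m2_1_3_5 < 0" by (rule pp2[OF pf10 s7])
    have s21: "b_m3_m2_1_3_5 < 0" by (rule pp2[OF pf11 s7])
    have s22: "b_m2_m1_1_3_5 > 0" by (rule pn2[OF pf12 s7])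
    have s23: "b_m5_m4_m2_1_5 > 0" by (rule pn4[OF pf18 s20])
    have s24: "b_m4_m2_1_4_5 < 0" by (rule pn1[OF pf19 s23])
    have s25: "b_m4_m3_1_2_3 > 0" by (rule pn2[OF pf30 s14])
    have s26: "b_m4_m2_1_2_3 > 0" by (rule pn2[OF pf31 s14])
    have s27: "b_m4_m1_1_2_3 > 0" by (rule pn2[OF pf32 s14])
    have s28: "b_m4_1_2_3_4 < 0" by (rule pp2[OF pf33 s14])
    have s29: "b_m5_m4_m2_1_3 < 0" by (rule pn3[OF pf37 s26])
    have s30: "b_m4_m2_1_3_4 < 0" by (rule pp2[OF pf38 s29])
    have s31: "b_m5_m3_m2_1_2 < 0" by (rule pn1[OF pf45 s15])
    have s32: "b_m5_m3_m1_1_2 < 0" by (rule pn1[OF pf46 s15])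
    have s33: "b_m5_m3_1_2_3 < 0" by (rule pn1[OF pf47 s15])
    have s34: "b_m5_m4_m3_m1_2 < 0" by (rule pp4[OF pf51 s32])
    have s35: "b_m5_m3_m1_2_3 > 0" by (rule pn2[OF pf52 s34])
    have s36: "b_m5_m3_m1_2_5 > 0" by (rule pn2[OF pf54 s34])
    have s37: "b_m5_m4_m1_2_4 > 0" by (rule pp3[OF pf55 s17])
    have s38: "b_m5_m2_m1_2_4 > 0" by (rule pp1[OF pf56 s37])
    have s39: "b_m5_m1_1_2_4 < 0" by (rule pn1[OF pf57 s37])
    have s40: "b_m5_m1_2_3_4 > 0" by (rule pp1[OF pf58 s37])
    have s41: "b_m5_m1_2_4_5 < 0" by (rule pn1[OF pf59 s37])
    have s42: "b_m5_m4_2_3_4 > 0" by (rule pp3[OF pf62 s40])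
    have s43: "b_m5_1_2_3_4 > 0" by (rule pp1[OF pf63 s42])
    have s44: "b_m5_2_3_4_5 < 0" by (rule pn1[OF pf64 s42])
    have s45: "b_m4_m3_m1_2_4 > 0" by (rule pp1[OF pf75 s17])
    have s46: "b_m3_m2_m1_2_4 < 0" by (rule pn1[OF pf76 s17])
    have s47: "b_m5_m2_m1_3_5 > 0" by (rule pp3[OF pf7 s22])
    have s48: "b_m2_m1_2_3_5 > 0" by (rule pp1[OF pf8 s47])
    have s49: "b_m2_m1_3_4_5 < 0" by (rule pn1[OF pf9 s47])
    have s50: "b_m4_m3_m2_1_5 < 0" by (rule pn1[OF pf15 s23])
    have s51: "b_m4_m2_m1_1_5 > 0" by (rule pp1[OF pf16 s23])
    have s52: "b_m4_m2_1_2_5 < 0" by (rule pn1[OF pf17 s23])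
    have s53: "b_m5_m4_m3_m2_5 > 0" by (rule pn4[OF pf21 s50])
    have s54: "b_m4_m3_m2_2_5 < 0" by (rule pn1[OF pf22 s53])
    have s55: "b_m4_m3_m2_3_5 < 0" by (rule pn1[OF pf23 s53])
    have s56: "b_m4_m3_m2_4_5 < 0" by (rule pn1[OF pf24 s53])
    have s57: "b_m4_m3_m2_1_3 > 0" by (rule pn2[OF pf35 s29])
    have s58: "b_m4_m2_m1_1_3 < 0" by (rule pp2[OF pf36 s29])
    have s59: "b_m5_m3_m2_m1_2 > 0" by (rule pn2[OF pf50 s34])
    have s60: "b_m5_m3_2_3_4 > 0" by (rule pp1[OF pf60 s42])
    have s61: "b_m5_m2_2_3_4 > 0" by (rule pp1[OF pf61 s42])
    have s62: "b_m5_m4_m2_m1_3 > 0" by (rule pn4[OF pf66 s58])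
    have s63: "b_m4_m2_m1_2_3 < 0" by (rule pn1[OF pf67 s62])
    have s64: "b_m4_m2_m1_3_4 > 0" by (rule pp1[OF pf68 s62])
    have s65: "b_m4_m2_m1_3_5 > 0" by (rule pp1[OF pf69 s62])
    have s66: "b_m5_m3_m2_m1_4 > 0" by (rule pn4[OF pf72 s46])
    have s67: "b_m3_m2_m1_3_4 < 0" by (rule pn1[OF pf73 s66])
    have s68: "b_m3_m2_m1_4_5 > 0" by (rule pp1[OF pf74 s66])
    have s69: "b_m3_m2_m1_3_5 > 0" by (rule pp1[OF pf6 s47])
    have s70: "b_m4_m3_m2_m1_5 < 0" by (rule pn1[OF pf20 s53])
    have s71: "b_m5_m4_m3_m2_m1 < 0" by (rule pn3[OF pf41 s59])
    have s72: "b_m5_m3_m2_m1_3 > 0" by (rule pn2[OF pf42 s71])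
    have s73: "b_m5_m3_m2_m1_5 > 0" by (rule pn2[OF pf44 s71])
    have s74: "b_m4_m3_m2_m1_3 < 0" by (rule pn1[OF pf65 s62])
    have s75: "b_m4_m3_m2_m1_4 > 0" by (rule pp1[OF pf70 s66])
    have s76: "b_m3_m2_m1_1_4 < 0" by (rule pn1[OF pf71 s66])
    have s77: "b_m5_m3_m2_m1_1 > 0" by (rule pn2[OF pf40 s71])
    have t1: "b_m5_m4_m3_m2_m1 * b_m5_m2_m1_3_5 < 0" by (rule mult_neg_pos[OF s71 s47])
    have t2: "b_m5_m4_m2_m1_3 * b_m5_m3_m2_m1_5 > 0" by (rule mult_pos_pos[OF s62 s73])
    have t3: "b_m5_m4_m2_m1_5 * b_m5_m3_m2_m1_3 > 0" using gp0 t1 t2 by linarith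
    have s78: "b_m5_m4_m2_m1_5 > 0" by (rule pp3[OF t3 s72])
    have t4: "b_m5_m4_m3_1_2 * b_m5_1_2_3_5 < 0" by (rule mult_pos_neg[OF s15 cA])
    have t5: "b_m5_m4_1_2_3 * b_m5_m3_1_2_5 > 0" by (rule mult_neg_neg[OF s14 s16])
    have t6: "b_m5_m4_1_2_5 * b_m5_m3_1_2_3 > 0" using gp2 t4 t5 by linarith
    have s79: "b_m5_m4_1_2_5 < 0" by (rule pp4[OF t6 s33])
    have t7: "b_m4_m3_m2_m1_3 * b_m4_m3_m2_1_5 > 0" by (rule mult_neg_neg[OF s74 s50])
    have t8: "b_m4_m3_m2_m1_5 * b_m4_m3_m2_1_3 < 0" by (rule mult_neg_pos[OF s70 s57])
    have t9: "b_m4_m3_m2_m1_1 * b_m4_m3_m2_3_5 > 0" using gp8 t7 t8 by linarith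
    have s80: "b_m4_m3_m2_m1_1 < 0" by (rule pp4[OF t9 s55])
    have t10: "b_m5_m4_m3_m2_m1 * b_m4_m2_m1_1_5 < 0" by (rule mult_neg_pos[OF s71 s51])
    have t11: "b_m5_m4_m2_m1_5 * b_m4_m3_m2_m1_1 < 0" by (rule mult_pos_neg[OF s78 s80])
    have t12: "b_m5_m4_m2_m1_1 * b_m4_m3_m2_m1_5 < 0" using gp26 t10 t11 by linarith
    have s81: "b_m5_m4_m2_m1_1 > 0" by (rule pn4[OF t12 s70])
    have t13: "b_m5_m4_m3_m2_m1 * b_m4_m2_m1_3_4 < 0" by (rule mult_neg_pos[OF s71 s64])
    have t14: "b_m5_m4_m2_m1_3 * b_m4_m3_m2_m1_4 > 0" by (rule mult_pos_pos[OF s62 s75])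
    have t15: "b_m5_m4_m2_m1_4 * b_m4_m3_m2_m1_3 > 0" using gp10 t13 t14 by linarith
    have s82: "b_m5_m4_m2_m1_4 < 0" by (rule pp4[OF t15 s74])
    have t16: "b_m5_m4_m2_m1_1 * b_m4_m2_m1_3_4 > 0" by (rule mult_pos_pos[OF s81 s64])
    have t17: "b_m5_m4_m2_m1_4 * b_m4_m2_m1_1_3 > 0" by (rule mult_neg_neg[OF s82 s58])
    have t18: "b_m5_m4_m2_m1_3 * b_m4_m2_m1_1_4 > 0" using gp27 t16 t17 by linarith
    have s83: "b_m4_m2_m1_1_4 > 0" by (rule pp1[OF t18 s62])
    have t19: "b_m5_m4_m3_1_2 * b_m4_1_2_3_4 < 0" by (rule mult_pos_neg[OF s15 s28])
    have t20: "b_m5_m4_1_2_3 * b_m4_m3_1_2_4 > 0" by (rule mult_neg_neg[OF s14 s9])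
    have t21: "b_m5_m4_1_2_4 * b_m4_m3_1_2_3 > 0" using gp28 t19 t20 by linarith
    have s84: "b_m5_m4_1_2_4 > 0" by (rule pp3[OF t21 s25])
    have t22: "b_m5_m4_m3_1_2 * b_m4_1_2_3_5 < 0" by (rule mult_pos_neg[OF s15 s2])
    have t23: "b_m5_m4_1_2_5 * b_m4_m3_1_2_3 < 0" by (rule mult_neg_pos[OF s79 s25])
    have t24: "b_m5_m4_1_2_3 * b_m4_m3_1_2_5 < 0" using gp29 t22 t23 by linarith
    have s85: "b_m4_m3_1_2_5 > 0" by (rule pn2[OF t24 s14])
    have t25: "b_m5_m4_1_2_3 * b_m4_m2_1_2_5 > 0" by (rule mult_neg_neg[OF s14 s52])
    have t26: "b_m5_m4_1_2_5 * b_m4_m2_1_2_3 < 0" by (rule mult_neg_pos[OF s79 s26])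
    have t27: "b_m5_m4_m2_1_2 * b_m4_1_2_3_5 > 0" using gp11 t25 t26 by linarith
    have s86: "b_m5_m4_m2_1_2 < 0" by (rule pp4[OF t27 s2])
    have t28: "b_m5_m4_1_2_4 * b_m4_1_2_3_5 < 0" by (rule mult_pos_neg[OF s84 s2])
    have t29: "b_m5_m4_1_2_5 * b_m4_1_2_3_4 > 0" by (rule mult_neg_neg[OF s79 s28])
    have t30: "b_m5_m4_1_2_3 * b_m4_1_2_4_5 < 0" using gp30 t28 t29 by linarith
    have s87: "b_m4_1_2_4_5 > 0" by (rule pn2[OF t30 s14])
    have t31: "b_m4_m3_1_2_3 * b_m4_m2_1_2_5 < 0" by (rule mult_pos_neg[OF s25 s52])
    have t32: "b_m4_m3_1_2_5 * b_m4_m2_1_2_3 > 0" by (rule mult_pos_pos[OF s85 s26])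
    have t33: "b_m4_m3_m2_1_2 * b_m4_1_2_3_5 < 0" using gp31 t31 t32 by linarith
    have s88: "b_m4_m3_m2_1_2 > 0" by (rule pn4[OF t33 s2])
    have t34: "b_m4_m2_1_2_3 * b_m4_1_2_4_5 > 0" by (rule mult_pos_pos[OF s26 s87])
    have t35: "b_m4_m2_1_2_5 * b_m4_1_2_3_4 > 0" by (rule mult_neg_neg[OF s52 s28])
    have t36: "b_m4_m2_1_2_4 * b_m4_1_2_3_5 > 0" using gp32 t34 t35 by linarith
    have s89: "b_m4_m2_1_2_4 < 0" by (rule pp4[OF t36 s2])
    have t37: "b_m5_m4_m2_m1_1 * b_m3_m2_m1_1_4 < 0" by (rule mult_pos_neg[OF s81 s76])
    have t38: "b_m5_m3_m2_m1_1 * b_m4_m2_m1_1_4 > 0" by (rule mult_pos_pos[OF s77 s83])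
    have t39: "b_m5_m2_m1_1_4 * b_m4_m3_m2_m1_1 > 0" using gp33 t37 t38 by linarith
    have s90: "b_m5_m2_m1_1_4 < 0" by (rule pp4[OF t39 s80])
    have t40: "b_m5_m4_m2_m1_4 * b_m3_m2_m1_2_4 > 0" by (rule mult_neg_neg[OF s82 s46])
    have t41: "b_m5_m2_m1_2_4 * b_m4_m3_m2_m1_4 > 0" by (rule mult_pos_pos[OF s38 s75])
    have t42: "b_m5_m3_m2_m1_4 * b_m4_m2_m1_2_4 > 0" using gp34 t40 t41 by linarith
    have s91: "b_m4_m2_m1_2_4 > 0" by (rule pp1[OF t42 s66])
    have t43: "b_m5_m2_m1_1_4 * b_m4_m2_m1_2_4 < 0" by (rule mult_neg_pos[OF s90 s91])
    have t44: "b_m5_m2_m1_2_4 * b_m4_m2_m1_1_4 > 0" by (rule mult_pos_pos[OF s38 s83])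
    have t45: "b_m5_m4_m2_m1_4 * b_m2_m1_1_2_4 < 0" using gp35 t43 t44 by linarith
    have s92: "b_m2_m1_1_2_4 > 0" by (rule pn2[OF t45 s82])
    have t46: "b_m5_m4_m2_1_2 * b_m3_m2_1_2_4 < 0" by (rule mult_neg_pos[OF s86 s10])
    have t47: "b_m5_m3_m2_1_2 * b_m4_m2_1_2_4 > 0" by (rule mult_neg_neg[OF s31 s89])
    have t48: "b_m5_m2_1_2_4 * b_m4_m3_m2_1_2 > 0" using gp36 t46 t47 by linarith
    have s93: "b_m5_m2_1_2_4 > 0" by (rule pp3[OF t48 s88])
    have t49: "b_m5_m4_1_2_4 * b_m3_m1_1_2_4 > 0" by (rule mult_pos_pos[OF s84 s11])
    have t50: "b_m5_m1_1_2_4 * b_m4_m3_1_2_4 > 0" by (rule mult_neg_neg[OF s39 s9])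
    have t51: "b_m5_m3_1_2_4 * b_m4_m1_1_2_4 > 0" using gp37 t49 t50 by linarith
    have s94: "b_m4_m1_1_2_4 < 0" by (rule pp2[OF t51 cB])
    have t52: "b_m5_m4_1_2_4 * b_m2_m1_1_2_4 > 0" by (rule mult_pos_pos[OF s84 s92])
    have t53: "b_m5_m2_1_2_4 * b_m4_m1_1_2_4 < 0" by (rule mult_pos_neg[OF s93 s94])
    have t54: "b_m5_m1_1_2_4 * b_m4_m2_1_2_4 > 0" by (rule mult_neg_neg[OF s39 s89])
    show False using gp38 t52 t53 t54 by linarith
  qed
  show False
  proof (cases "b_m5_1_2_3_5 > 0")
    case True
    show False
    proof (cases "b_m5_m3_1_2_4 > 0")
      case True then show False using case2 \<open>b_m5_1_2_3_5 > 0\<close> by blast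
    next
      case False then have "b_m5_m3_1_2_4 < 0" using nzB by simp
      then show False using case0 \<open>b_m5_1_2_3_5 > 0\<close> by blast
    qed
  next
    case False then have nA: "b_m5_1_2_3_5 < 0" using nzA by simp
    show False
    proof (cases "b_m5_m3_1_2_4 > 0")
      case True then show False using case1 nA by blast
    next
      case False then have "b_m5_m3_1_2_4 < 0" using nzB by simp
      then show False using case3 nA by blast
    qed
  qed
qed

lemma base_c: assumes "5 \<le> l" "l \<le> n" "1 \<le> i" "i \<le> l - 4" shows "{i, i+1, l-2, l} \<in> jockusch_base_facets n"
proof -
  have "{i, i+1, l-2, l} \<in> {{i, i+1, l-2, l} | i l. 5 \<le> l \<and> l \<le> n \<and> 1 \<le> i \<and> i \<le> l-4}"
    (is "_ \<in> ?A") using assms by blast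
  then show ?thesis unfolding jockusch_base_facets_def by (intro UnI1 UnI2)
qed
lemma base_cn: assumes "5 \<le> l" "l \<le> n" "1 \<le> i" "i \<le> l - 4" shows "{-i, -i-1, l-2, l} \<in> jockusch_base_facets n"
proof -
  have "{-i, -i-1, l-2, l} \<in> {{-i, -i-1, l-2, l} | i l. 5 \<le> l \<and> l \<le> n \<and> 1 \<le> i \<and> i \<le> l-4}"
    using assms by blast
  then show ?thesis unfolding jockusch_base_facets_def by (intro UnI1 UnI2)
qed
lemma base_d:
  assumes "5 \<le> l" "l \<le> n" "F \<in> {{1, -(l-3), l-2, l}, {1, -(l-3), -(l-1), l}, {-(l-3), -(l-2), -(l-1), l}}"
  shows "F \<in> jockusch_base_facets n"
proof -
  have "F \<in> (\<Union>l\<in>{5..n}. {{1, -(l-3), l-2, l}, {1, -(l-3), -(l-1), l}, {-(l-3), -(l-2), -(l-1), l}})"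
    using assms by (intro UN_I[of l]) auto
  then show ?thesis unfolding jockusch_base_facets_def by (intro UnI1 UnI2)
qed
lemma base_d1: "5 \<le> l \<Longrightarrow> l \<le> n \<Longrightarrow> {1, -(l-3), l-2, l} \<in> jockusch_base_facets n"
  by (rule base_d) auto
lemma base_d2: "5 \<le> l \<Longrightarrow> l \<le> n \<Longrightarrow> {1, -(l-3), -(l-1), l} \<in> jockusch_base_facets n"
  by (rule base_d) auto
lemma base_d3: "5 \<le> l \<Longrightarrow> l \<le> n \<Longrightarrow> {-(l-3), -(l-2), -(l-1), l} \<in> jockusch_base_facets n"
  by (rule base_d) auto
lemma base_e:
  assumes "F \<in> {{1, 2, -3, 4}, {1, 2, 3, -4}, {1, -2, 3, -4}}"
  shows "F \<in> jockusch_base_facets n"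
  unfolding jockusch_base_facets_def by (rule UnI2, rule assms)
lemma base_e1: "{1, 2, -3, 4} \<in> jockusch_base_facets n" by (rule base_e) simp
lemma base_e2: "{1, 2, 3, -4} \<in> jockusch_base_facets n" by (rule base_e) simp
lemma base_e3: "{1, -2, 3, -4} \<in> jockusch_base_facets n" by (rule base_e) simp
lemma facet_of_base: "F \<in> jockusch_base_facets n \<Longrightarrow> F \<in> jockusch_faces n"
  unfolding jockusch_faces_def jockusch_facets_def by blast
lemma facet_of_anti: "F \<in> jockusch_base_facets n \<Longrightarrow> uminus ` F \<in> jockusch_faces n"
  unfolding jockusch_faces_def jockusch_facets_def by blast

theorem mainTheorem7:
  fixes n :: int
  assumes "n \<ge> 5"
  shows "\<not> polytopal4 (jockusch_vertices n) (jockusch_faces n)"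
proof
  assume "polytopal4 (jockusch_vertices n) (jockusch_faces n)"
  then obtain P :: "(real^4) set" and f :: "int \<Rightarrow> real^4" where sp: "simplicial_polytope 4 P"
    and bij: "bij_betw f (jockusch_vertices n) (poly_vertices P)"
    and iso: "\<forall>S. S \<subseteq> jockusch_vertices n \<longrightarrow> (S \<in> jockusch_faces n \<longleftrightarrow> f ` S \<in> boundary_complex P)"
    unfolding polytopal4_def by blast
  have sw: "\<And>i j c d e. j < i \<Longrightarrow> br (f i) (f j) c d e = - br (f j) (f i) c d e"
           "\<And>i j a d e. j < i \<Longrightarrow> br a (f i) (f j) d e = - br a (f j) (f i) d e"
           "\<And>i j a b e. j < i \<Longrightarrow> br a b (f i) (f j) e = - br a b (f j) (f i) e"
           "\<And>i j a b c. j < i \<Longrightarrow> br a b c (f i) (f j) = - br a b c (f j) (f i)"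
    using br_sw12 br_sw23 br_sw34 br_sw45 by blast+
  have V: "\<And>x::int. x \<noteq> 0 \<Longrightarrow> \<bar>x\<bar> \<le> 5 \<Longrightarrow> x \<in> jockusch_vertices n"
    using assms unfolding jockusch_vertices_def by auto
  have fc0: "{1, 2, 3, 5} \<in> jockusch_faces n" using facet_of_base[OF base_c[of 5 n 1]] assms by (simp add: insert_commute)
  have fc1: "{-2, -1, 3, 5} \<in> jockusch_faces n" using facet_of_base[OF base_cn[of 5 n 1]] assms by (simp add: insert_commute)
  have fc2: "{-2, 1, 3, 5} \<in> jockusch_faces n" using facet_of_base[OF base_d1[of 5 n]] assms by (simp add: insert_commute)
  have fc3: "{-4, -2, 1, 5} \<in> jockusch_faces n" using facet_of_base[OF base_d2[of 5 n]] assms by (simp add: insert_commute)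
  have fc4: "{-4, -3, -2, 5} \<in> jockusch_faces n" using facet_of_base[OF base_d3[of 5 n]] assms by (simp add: insert_commute)
  have fc5: "{-3, 1, 2, 4} \<in> jockusch_faces n" using facet_of_base[OF base_e1] assms by (simp add: insert_commute)
  have fc6: "{-4, 1, 2, 3} \<in> jockusch_faces n" using facet_of_base[OF base_e2] assms by (simp add: insert_commute)
  have fc7: "{-4, -2, 1, 3} \<in> jockusch_faces n" using facet_of_base[OF base_e3] assms by (simp add: insert_commute)
  have fc8: "{-5, -3, -2, -1} \<in> jockusch_faces n" using facet_of_anti[OF base_c[of 5 n 1]] assms by (simp add: insert_commute)
  have fc9: "{-5, -3, 1, 2} \<in> jockusch_faces n" using facet_of_anti[OF base_cn[of 5 n 1]] assms by (simp add: insert_commute)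
  have fc10: "{-5, -3, -1, 2} \<in> jockusch_faces n" using facet_of_anti[OF base_d1[of 5 n]] assms by (simp add: insert_commute)
  have fc11: "{-5, -1, 2, 4} \<in> jockusch_faces n" using facet_of_anti[OF base_d2[of 5 n]] assms by (simp add: insert_commute)
  have fc12: "{-5, 2, 3, 4} \<in> jockusch_faces n" using facet_of_anti[OF base_d3[of 5 n]] assms by (simp add: insert_commute)
  have fc13: "{-4, -2, -1, 3} \<in> jockusch_faces n" using facet_of_anti[OF base_e1] assms by (simp add: insert_commute)
  have fc14: "{-3, -2, -1, 4} \<in> jockusch_faces n" using facet_of_anti[OF base_e2] assms by (simp add: insert_commute)
  have fc15: "{-3, -1, 2, 4} \<in> jockusch_faces n" using facet_of_anti[OF base_e3] assms by (simp add: insert_commute)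
  have h0: "br (f 1) (f 2) (f 3) (f 5) (f (-5)) * br (f 1) (f 2) (f 3) (f 5) (f (-4)) > 0"
    by (rule facet_br[OF sp bij iso fc0]) (simp_all add: V)
  have pf0: "br (f (-5)) (f 1) (f 2) (f 3) (f 5) * br (f (-4)) (f 1) (f 2) (f 3) (f 5) > 0" using h0 by (simp add: sw)
  have h1: "br (f 1) (f 2) (f 3) (f 5) (f (-5)) * br (f 1) (f 2) (f 3) (f 5) (f (-3)) > 0"
    by (rule facet_br[OF sp bij iso fc0]) (simp_all add: V)
  have pf1: "br (f (-5)) (f 1) (f 2) (f 3) (f 5) * br (f (-3)) (f 1) (f 2) (f 3) (f 5) > 0" using h1 by (simp add: sw)
  have h2: "br (f 1) (f 2) (f 3) (f 5) (f (-5)) * br (f 1) (f 2) (f 3) (f 5) (f (-2)) > 0"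
    by (rule facet_br[OF sp bij iso fc0]) (simp_all add: V)
  have pf2: "br (f (-5)) (f 1) (f 2) (f 3) (f 5) * br (f (-2)) (f 1) (f 2) (f 3) (f 5) > 0" using h2 by (simp add: sw)
  have h3: "br (f 1) (f 2) (f 3) (f 5) (f (-5)) * br (f 1) (f 2) (f 3) (f 5) (f (-1)) > 0"
    by (rule facet_br[OF sp bij iso fc0]) (simp_all add: V)
  have pf3: "br (f (-5)) (f 1) (f 2) (f 3) (f 5) * br (f (-1)) (f 1) (f 2) (f 3) (f 5) > 0" using h3 by (simp add: sw)
  have h4: "br (f 1) (f 2) (f 3) (f 5) (f (-5)) * br (f 1) (f 2) (f 3) (f 5) (f 4) > 0"
    by (rule facet_br[OF sp bij iso fc0]) (simp_all add: V)
  have pf4: "br (f (-5)) (f 1) (f 2) (f 3) (f 5) * br (f 1) (f 2) (f 3) (f 4) (f 5) < 0" using h4 by (simp add: sw)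
  have h5: "br (f (-2)) (f (-1)) (f 3) (f 5) (f (-5)) * br (f (-2)) (f (-1)) (f 3) (f 5) (f (-4)) > 0"
    by (rule facet_br[OF sp bij iso fc1]) (simp_all add: V)
  have pf5: "br (f (-5)) (f (-2)) (f (-1)) (f 3) (f 5) * br (f (-4)) (f (-2)) (f (-1)) (f 3) (f 5) > 0" using h5 by (simp add: sw)
  have h6: "br (f (-2)) (f (-1)) (f 3) (f 5) (f (-5)) * br (f (-2)) (f (-1)) (f 3) (f 5) (f (-3)) > 0"
    by (rule facet_br[OF sp bij iso fc1]) (simp_all add: V)
  have pf6: "br (f (-5)) (f (-2)) (f (-1)) (f 3) (f 5) * br (f (-3)) (f (-2)) (f (-1)) (f 3) (f 5) > 0" using h6 by (simp add: sw)
  have h7: "br (f (-2)) (f (-1)) (f 3) (f 5) (f (-5)) * br (f (-2)) (f (-1)) (f 3) (f 5) (f 1) > 0"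
    by (rule facet_br[OF sp bij iso fc1]) (simp_all add: V)
  have pf7: "br (f (-5)) (f (-2)) (f (-1)) (f 3) (f 5) * br (f (-2)) (f (-1)) (f 1) (f 3) (f 5) > 0" using h7 by (simp add: sw)
  have h8: "br (f (-2)) (f (-1)) (f 3) (f 5) (f (-5)) * br (f (-2)) (f (-1)) (f 3) (f 5) (f 2) > 0"
    by (rule facet_br[OF sp bij iso fc1]) (simp_all add: V)
  have pf8: "br (f (-5)) (f (-2)) (f (-1)) (f 3) (f 5) * br (f (-2)) (f (-1)) (f 2) (f 3) (f 5) > 0" using h8 by (simp add: sw)
  have h9: "br (f (-2)) (f (-1)) (f 3) (f 5) (f (-5)) * br (f (-2)) (f (-1)) (f 3) (f 5) (f 4) > 0"
    by (rule facet_br[OF sp bij iso fc1]) (simp_all add: V)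
  have pf9: "br (f (-5)) (f (-2)) (f (-1)) (f 3) (f 5) * br (f (-2)) (f (-1)) (f 3) (f 4) (f 5) < 0" using h9 by (simp add: sw)
  have h10: "br (f (-2)) (f 1) (f 3) (f 5) (f (-5)) * br (f (-2)) (f 1) (f 3) (f 5) (f (-4)) > 0"
    by (rule facet_br[OF sp bij iso fc2]) (simp_all add: V)
  have pf10: "br (f (-5)) (f (-2)) (f 1) (f 3) (f 5) * br (f (-4)) (f (-2)) (f 1) (f 3) (f 5) > 0" using h10 by (simp add: sw)
  have h11: "br (f (-2)) (f 1) (f 3) (f 5) (f (-5)) * br (f (-2)) (f 1) (f 3) (f 5) (f (-3)) > 0"
    by (rule facet_br[OF sp bij iso fc2]) (simp_all add: V)
  have pf11: "br (f (-5)) (f (-2)) (f 1) (f 3) (f 5) * br (f (-3)) (f (-2)) (f 1) (f 3) (f 5) > 0" using h11 by (simp add: sw)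
  have h12: "br (f (-2)) (f 1) (f 3) (f 5) (f (-5)) * br (f (-2)) (f 1) (f 3) (f 5) (f (-1)) > 0"
    by (rule facet_br[OF sp bij iso fc2]) (simp_all add: V)
  have pf12: "br (f (-5)) (f (-2)) (f 1) (f 3) (f 5) * br (f (-2)) (f (-1)) (f 1) (f 3) (f 5) < 0" using h12 by (simp add: sw)
  have h13: "br (f (-2)) (f 1) (f 3) (f 5) (f (-5)) * br (f (-2)) (f 1) (f 3) (f 5) (f 2) > 0"
    by (rule facet_br[OF sp bij iso fc2]) (simp_all add: V)
  have pf13: "br (f (-5)) (f (-2)) (f 1) (f 3) (f 5) * br (f (-2)) (f 1) (f 2) (f 3) (f 5) > 0" using h13 by (simp add: sw)
  have h14: "br (f (-2)) (f 1) (f 3) (f 5) (f (-5)) * br (f (-2)) (f 1) (f 3) (f 5) (f 4) > 0"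
    by (rule facet_br[OF sp bij iso fc2]) (simp_all add: V)
  have pf14: "br (f (-5)) (f (-2)) (f 1) (f 3) (f 5) * br (f (-2)) (f 1) (f 3) (f 4) (f 5) < 0" using h14 by (simp add: sw)
  have h15: "br (f (-4)) (f (-2)) (f 1) (f 5) (f (-5)) * br (f (-4)) (f (-2)) (f 1) (f 5) (f (-3)) > 0"
    by (rule facet_br[OF sp bij iso fc3]) (simp_all add: V)
  have pf15: "br (f (-5)) (f (-4)) (f (-2)) (f 1) (f 5) * br (f (-4)) (f (-3)) (f (-2)) (f 1) (f 5) < 0" using h15 by (simp add: sw)
  have h16: "br (f (-4)) (f (-2)) (f 1) (f 5) (f (-5)) * br (f (-4)) (f (-2)) (f 1) (f 5) (f (-1)) > 0"
    by (rule facet_br[OF sp bij iso fc3]) (simp_all add: V)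
  have pf16: "br (f (-5)) (f (-4)) (f (-2)) (f 1) (f 5) * br (f (-4)) (f (-2)) (f (-1)) (f 1) (f 5) > 0" using h16 by (simp add: sw)
  have h17: "br (f (-4)) (f (-2)) (f 1) (f 5) (f (-5)) * br (f (-4)) (f (-2)) (f 1) (f 5) (f 2) > 0"
    by (rule facet_br[OF sp bij iso fc3]) (simp_all add: V)
  have pf17: "br (f (-5)) (f (-4)) (f (-2)) (f 1) (f 5) * br (f (-4)) (f (-2)) (f 1) (f 2) (f 5) < 0" using h17 by (simp add: sw)
  have h18: "br (f (-4)) (f (-2)) (f 1) (f 5) (f (-5)) * br (f (-4)) (f (-2)) (f 1) (f 5) (f 3) > 0"
    by (rule facet_br[OF sp bij iso fc3]) (simp_all add: V)
  have pf18: "br (f (-5)) (f (-4)) (f (-2)) (f 1) (f 5) * br (f (-4)) (f (-2)) (f 1) (f 3) (f 5) < 0" using h18 by (simp add: sw)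
  have h19: "br (f (-4)) (f (-2)) (f 1) (f 5) (f (-5)) * br (f (-4)) (f (-2)) (f 1) (f 5) (f 4) > 0"
    by (rule facet_br[OF sp bij iso fc3]) (simp_all add: V)
  have pf19: "br (f (-5)) (f (-4)) (f (-2)) (f 1) (f 5) * br (f (-4)) (f (-2)) (f 1) (f 4) (f 5) < 0" using h19 by (simp add: sw)
  have h20: "br (f (-4)) (f (-3)) (f (-2)) (f 5) (f (-5)) * br (f (-4)) (f (-3)) (f (-2)) (f 5) (f (-1)) > 0"
    by (rule facet_br[OF sp bij iso fc4]) (simp_all add: V)
  have pf20: "br (f (-5)) (f (-4)) (f (-3)) (f (-2)) (f 5) * br (f (-4)) (f (-3)) (f (-2)) (f (-1)) (f 5) < 0" using h20 by (simp add: sw)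
  have h21: "br (f (-4)) (f (-3)) (f (-2)) (f 5) (f (-5)) * br (f (-4)) (f (-3)) (f (-2)) (f 5) (f 1) > 0"
    by (rule facet_br[OF sp bij iso fc4]) (simp_all add: V)
  have pf21: "br (f (-5)) (f (-4)) (f (-3)) (f (-2)) (f 5) * br (f (-4)) (f (-3)) (f (-2)) (f 1) (f 5) < 0" using h21 by (simp add: sw)
  have h22: "br (f (-4)) (f (-3)) (f (-2)) (f 5) (f (-5)) * br (f (-4)) (f (-3)) (f (-2)) (f 5) (f 2) > 0"
    by (rule facet_br[OF sp bij iso fc4]) (simp_all add: V)
  have pf22: "br (f (-5)) (f (-4)) (f (-3)) (f (-2)) (f 5) * br (f (-4)) (f (-3)) (f (-2)) (f 2) (f 5) < 0" using h22 by (simp add: sw)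
  have h23: "br (f (-4)) (f (-3)) (f (-2)) (f 5) (f (-5)) * br (f (-4)) (f (-3)) (f (-2)) (f 5) (f 3) > 0"
    by (rule facet_br[OF sp bij iso fc4]) (simp_all add: V)
  have pf23: "br (f (-5)) (f (-4)) (f (-3)) (f (-2)) (f 5) * br (f (-4)) (f (-3)) (f (-2)) (f 3) (f 5) < 0" using h23 by (simp add: sw)
  have h24: "br (f (-4)) (f (-3)) (f (-2)) (f 5) (f (-5)) * br (f (-4)) (f (-3)) (f (-2)) (f 5) (f 4) > 0"
    by (rule facet_br[OF sp bij iso fc4]) (simp_all add: V)
  have pf24: "br (f (-5)) (f (-4)) (f (-3)) (f (-2)) (f 5) * br (f (-4)) (f (-3)) (f (-2)) (f 4) (f 5) < 0" using h24 by (simp add: sw)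
  have h25: "br (f (-3)) (f 1) (f 2) (f 4) (f (-5)) * br (f (-3)) (f 1) (f 2) (f 4) (f (-4)) > 0"
    by (rule facet_br[OF sp bij iso fc5]) (simp_all add: V)
  have pf25: "br (f (-5)) (f (-3)) (f 1) (f 2) (f 4) * br (f (-4)) (f (-3)) (f 1) (f 2) (f 4) > 0" using h25 by (simp add: sw)
  have h26: "br (f (-3)) (f 1) (f 2) (f 4) (f (-5)) * br (f (-3)) (f 1) (f 2) (f 4) (f (-2)) > 0"
    by (rule facet_br[OF sp bij iso fc5]) (simp_all add: V)
  have pf26: "br (f (-5)) (f (-3)) (f 1) (f 2) (f 4) * br (f (-3)) (f (-2)) (f 1) (f 2) (f 4) < 0" using h26 by (simp add: sw)
  have h27: "br (f (-3)) (f 1) (f 2) (f 4) (f (-5)) * br (f (-3)) (f 1) (f 2) (f 4) (f (-1)) > 0"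
    by (rule facet_br[OF sp bij iso fc5]) (simp_all add: V)
  have pf27: "br (f (-5)) (f (-3)) (f 1) (f 2) (f 4) * br (f (-3)) (f (-1)) (f 1) (f 2) (f 4) < 0" using h27 by (simp add: sw)
  have h28: "br (f (-3)) (f 1) (f 2) (f 4) (f (-5)) * br (f (-3)) (f 1) (f 2) (f 4) (f 3) > 0"
    by (rule facet_br[OF sp bij iso fc5]) (simp_all add: V)
  have pf28: "br (f (-5)) (f (-3)) (f 1) (f 2) (f 4) * br (f (-3)) (f 1) (f 2) (f 3) (f 4) < 0" using h28 by (simp add: sw)
  have h29: "br (f (-3)) (f 1) (f 2) (f 4) (f (-5)) * br (f (-3)) (f 1) (f 2) (f 4) (f 5) > 0"
    by (rule facet_br[OF sp bij iso fc5]) (simp_all add: V)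
  have pf29: "br (f (-5)) (f (-3)) (f 1) (f 2) (f 4) * br (f (-3)) (f 1) (f 2) (f 4) (f 5) > 0" using h29 by (simp add: sw)
  have h30: "br (f (-4)) (f 1) (f 2) (f 3) (f (-5)) * br (f (-4)) (f 1) (f 2) (f 3) (f (-3)) > 0"
    by (rule facet_br[OF sp bij iso fc6]) (simp_all add: V)
  have pf30: "br (f (-5)) (f (-4)) (f 1) (f 2) (f 3) * br (f (-4)) (f (-3)) (f 1) (f 2) (f 3) < 0" using h30 by (simp add: sw)
  have h31: "br (f (-4)) (f 1) (f 2) (f 3) (f (-5)) * br (f (-4)) (f 1) (f 2) (f 3) (f (-2)) > 0"
    by (rule facet_br[OF sp bij iso fc6]) (simp_all add: V)
  have pf31: "br (f (-5)) (f (-4)) (f 1) (f 2) (f 3) * br (f (-4)) (f (-2)) (f 1) (f 2) (f 3) < 0" using h31 by (simp add: sw)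
  have h32: "br (f (-4)) (f 1) (f 2) (f 3) (f (-5)) * br (f (-4)) (f 1) (f 2) (f 3) (f (-1)) > 0"
    by (rule facet_br[OF sp bij iso fc6]) (simp_all add: V)
  have pf32: "br (f (-5)) (f (-4)) (f 1) (f 2) (f 3) * br (f (-4)) (f (-1)) (f 1) (f 2) (f 3) < 0" using h32 by (simp add: sw)
  have h33: "br (f (-4)) (f 1) (f 2) (f 3) (f (-5)) * br (f (-4)) (f 1) (f 2) (f 3) (f 4) > 0"
    by (rule facet_br[OF sp bij iso fc6]) (simp_all add: V)
  have pf33: "br (f (-5)) (f (-4)) (f 1) (f 2) (f 3) * br (f (-4)) (f 1) (f 2) (f 3) (f 4) > 0" using h33 by (simp add: sw)
  have h34: "br (f (-4)) (f 1) (f 2) (f 3) (f (-5)) * br (f (-4)) (f 1) (f 2) (f 3) (f 5) > 0"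
    by (rule facet_br[OF sp bij iso fc6]) (simp_all add: V)
  have pf34: "br (f (-5)) (f (-4)) (f 1) (f 2) (f 3) * br (f (-4)) (f 1) (f 2) (f 3) (f 5) > 0" using h34 by (simp add: sw)
  have h35: "br (f (-4)) (f (-2)) (f 1) (f 3) (f (-5)) * br (f (-4)) (f (-2)) (f 1) (f 3) (f (-3)) > 0"
    by (rule facet_br[OF sp bij iso fc7]) (simp_all add: V)
  have pf35: "br (f (-5)) (f (-4)) (f (-2)) (f 1) (f 3) * br (f (-4)) (f (-3)) (f (-2)) (f 1) (f 3) < 0" using h35 by (simp add: sw)
  have h36: "br (f (-4)) (f (-2)) (f 1) (f 3) (f (-5)) * br (f (-4)) (f (-2)) (f 1) (f 3) (f (-1)) > 0"
    by (rule facet_br[OF sp bij iso fc7]) (simp_all add: V)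
  have pf36: "br (f (-5)) (f (-4)) (f (-2)) (f 1) (f 3) * br (f (-4)) (f (-2)) (f (-1)) (f 1) (f 3) > 0" using h36 by (simp add: sw)
  have h37: "br (f (-4)) (f (-2)) (f 1) (f 3) (f (-5)) * br (f (-4)) (f (-2)) (f 1) (f 3) (f 2) > 0"
    by (rule facet_br[OF sp bij iso fc7]) (simp_all add: V)
  have pf37: "br (f (-5)) (f (-4)) (f (-2)) (f 1) (f 3) * br (f (-4)) (f (-2)) (f 1) (f 2) (f 3) < 0" using h37 by (simp add: sw)
  have h38: "br (f (-4)) (f (-2)) (f 1) (f 3) (f (-5)) * br (f (-4)) (f (-2)) (f 1) (f 3) (f 4) > 0"
    by (rule facet_br[OF sp bij iso fc7]) (simp_all add: V)
  have pf38: "br (f (-5)) (f (-4)) (f (-2)) (f 1) (f 3) * br (f (-4)) (f (-2)) (f 1) (f 3) (f 4) > 0" using h38 by (simp add: sw)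
  have h39: "br (f (-4)) (f (-2)) (f 1) (f 3) (f (-5)) * br (f (-4)) (f (-2)) (f 1) (f 3) (f 5) > 0"
    by (rule facet_br[OF sp bij iso fc7]) (simp_all add: V)
  have pf39: "br (f (-5)) (f (-4)) (f (-2)) (f 1) (f 3) * br (f (-4)) (f (-2)) (f 1) (f 3) (f 5) > 0" using h39 by (simp add: sw)
  have h40: "br (f (-5)) (f (-3)) (f (-2)) (f (-1)) (f (-4)) * br (f (-5)) (f (-3)) (f (-2)) (f (-1)) (f 1) > 0"
    by (rule facet_br[OF sp bij iso fc8]) (simp_all add: V)
  have pf40: "br (f (-5)) (f (-4)) (f (-3)) (f (-2)) (f (-1)) * br (f (-5)) (f (-3)) (f (-2)) (f (-1)) (f 1) < 0" using h40 by (simp add: sw)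
  have h41: "br (f (-5)) (f (-3)) (f (-2)) (f (-1)) (f (-4)) * br (f (-5)) (f (-3)) (f (-2)) (f (-1)) (f 2) > 0"
    by (rule facet_br[OF sp bij iso fc8]) (simp_all add: V)
  have pf41: "br (f (-5)) (f (-4)) (f (-3)) (f (-2)) (f (-1)) * br (f (-5)) (f (-3)) (f (-2)) (f (-1)) (f 2) < 0" using h41 by (simp add: sw)
  have h42: "br (f (-5)) (f (-3)) (f (-2)) (f (-1)) (f (-4)) * br (f (-5)) (f (-3)) (f (-2)) (f (-1)) (f 3) > 0"
    by (rule facet_br[OF sp bij iso fc8]) (simp_all add: V)
  have pf42: "br (f (-5)) (f (-4)) (f (-3)) (f (-2)) (f (-1)) * br (f (-5)) (f (-3)) (f (-2)) (f (-1)) (f 3) < 0" using h42 by (simp add: sw)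
  have h43: "br (f (-5)) (f (-3)) (f (-2)) (f (-1)) (f (-4)) * br (f (-5)) (f (-3)) (f (-2)) (f (-1)) (f 4) > 0"
    by (rule facet_br[OF sp bij iso fc8]) (simp_all add: V)
  have pf43: "br (f (-5)) (f (-4)) (f (-3)) (f (-2)) (f (-1)) * br (f (-5)) (f (-3)) (f (-2)) (f (-1)) (f 4) < 0" using h43 by (simp add: sw)
  have h44: "br (f (-5)) (f (-3)) (f (-2)) (f (-1)) (f (-4)) * br (f (-5)) (f (-3)) (f (-2)) (f (-1)) (f 5) > 0"
    by (rule facet_br[OF sp bij iso fc8]) (simp_all add: V)
  have pf44: "br (f (-5)) (f (-4)) (f (-3)) (f (-2)) (f (-1)) * br (f (-5)) (f (-3)) (f (-2)) (f (-1)) (f 5) < 0" using h44 by (simp add: sw)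
  have h45: "br (f (-5)) (f (-3)) (f 1) (f 2) (f (-4)) * br (f (-5)) (f (-3)) (f 1) (f 2) (f (-2)) > 0"
    by (rule facet_br[OF sp bij iso fc9]) (simp_all add: V)
  have pf45: "br (f (-5)) (f (-4)) (f (-3)) (f 1) (f 2) * br (f (-5)) (f (-3)) (f (-2)) (f 1) (f 2) < 0" using h45 by (simp add: sw)
  have h46: "br (f (-5)) (f (-3)) (f 1) (f 2) (f (-4)) * br (f (-5)) (f (-3)) (f 1) (f 2) (f (-1)) > 0"
    by (rule facet_br[OF sp bij iso fc9]) (simp_all add: V)
  have pf46: "br (f (-5)) (f (-4)) (f (-3)) (f 1) (f 2) * br (f (-5)) (f (-3)) (f (-1)) (f 1) (f 2) < 0" using h46 by (simp add: sw)
  have h47: "br (f (-5)) (f (-3)) (f 1) (f 2) (f (-4)) * br (f (-5)) (f (-3)) (f 1) (f 2) (f 3) > 0"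
    by (rule facet_br[OF sp bij iso fc9]) (simp_all add: V)
  have pf47: "br (f (-5)) (f (-4)) (f (-3)) (f 1) (f 2) * br (f (-5)) (f (-3)) (f 1) (f 2) (f 3) < 0" using h47 by (simp add: sw)
  have h48: "br (f (-5)) (f (-3)) (f 1) (f 2) (f (-4)) * br (f (-5)) (f (-3)) (f 1) (f 2) (f 4) > 0"
    by (rule facet_br[OF sp bij iso fc9]) (simp_all add: V)
  have pf48: "br (f (-5)) (f (-4)) (f (-3)) (f 1) (f 2) * br (f (-5)) (f (-3)) (f 1) (f 2) (f 4) < 0" using h48 by (simp add: sw)
  have h49: "br (f (-5)) (f (-3)) (f 1) (f 2) (f (-4)) * br (f (-5)) (f (-3)) (f 1) (f 2) (f 5) > 0"
    by (rule facet_br[OF sp bij iso fc9]) (simp_all add: V)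
  have pf49: "br (f (-5)) (f (-4)) (f (-3)) (f 1) (f 2) * br (f (-5)) (f (-3)) (f 1) (f 2) (f 5) < 0" using h49 by (simp add: sw)
  have h50: "br (f (-5)) (f (-3)) (f (-1)) (f 2) (f (-4)) * br (f (-5)) (f (-3)) (f (-1)) (f 2) (f (-2)) > 0"
    by (rule facet_br[OF sp bij iso fc10]) (simp_all add: V)
  have pf50: "br (f (-5)) (f (-4)) (f (-3)) (f (-1)) (f 2) * br (f (-5)) (f (-3)) (f (-2)) (f (-1)) (f 2) < 0" using h50 by (simp add: sw)
  have h51: "br (f (-5)) (f (-3)) (f (-1)) (f 2) (f (-4)) * br (f (-5)) (f (-3)) (f (-1)) (f 2) (f 1) > 0"
    by (rule facet_br[OF sp bij iso fc10]) (simp_all add: V)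
  have pf51: "br (f (-5)) (f (-4)) (f (-3)) (f (-1)) (f 2) * br (f (-5)) (f (-3)) (f (-1)) (f 1) (f 2) > 0" using h51 by (simp add: sw)
  have h52: "br (f (-5)) (f (-3)) (f (-1)) (f 2) (f (-4)) * br (f (-5)) (f (-3)) (f (-1)) (f 2) (f 3) > 0"
    by (rule facet_br[OF sp bij iso fc10]) (simp_all add: V)
  have pf52: "br (f (-5)) (f (-4)) (f (-3)) (f (-1)) (f 2) * br (f (-5)) (f (-3)) (f (-1)) (f 2) (f 3) < 0" using h52 by (simp add: sw)
  have h53: "br (f (-5)) (f (-3)) (f (-1)) (f 2) (f (-4)) * br (f (-5)) (f (-3)) (f (-1)) (f 2) (f 4) > 0"
    by (rule facet_br[OF sp bij iso fc10]) (simp_all add: V)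
  have pf53: "br (f (-5)) (f (-4)) (f (-3)) (f (-1)) (f 2) * br (f (-5)) (f (-3)) (f (-1)) (f 2) (f 4) < 0" using h53 by (simp add: sw)
  have h54: "br (f (-5)) (f (-3)) (f (-1)) (f 2) (f (-4)) * br (f (-5)) (f (-3)) (f (-1)) (f 2) (f 5) > 0"
    by (rule facet_br[OF sp bij iso fc10]) (simp_all add: V)
  have pf54: "br (f (-5)) (f (-4)) (f (-3)) (f (-1)) (f 2) * br (f (-5)) (f (-3)) (f (-1)) (f 2) (f 5) < 0" using h54 by (simp add: sw)
  have h55: "br (f (-5)) (f (-1)) (f 2) (f 4) (f (-4)) * br (f (-5)) (f (-1)) (f 2) (f 4) (f (-3)) > 0"
    by (rule facet_br[OF sp bij iso fc11]) (simp_all add: V)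
  have pf55: "br (f (-5)) (f (-4)) (f (-1)) (f 2) (f 4) * br (f (-5)) (f (-3)) (f (-1)) (f 2) (f 4) > 0" using h55 by (simp add: sw)
  have h56: "br (f (-5)) (f (-1)) (f 2) (f 4) (f (-4)) * br (f (-5)) (f (-1)) (f 2) (f 4) (f (-2)) > 0"
    by (rule facet_br[OF sp bij iso fc11]) (simp_all add: V)
  have pf56: "br (f (-5)) (f (-4)) (f (-1)) (f 2) (f 4) * br (f (-5)) (f (-2)) (f (-1)) (f 2) (f 4) > 0" using h56 by (simp add: sw)
  have h57: "br (f (-5)) (f (-1)) (f 2) (f 4) (f (-4)) * br (f (-5)) (f (-1)) (f 2) (f 4) (f 1) > 0"
    by (rule facet_br[OF sp bij iso fc11]) (simp_all add: V)
  have pf57: "br (f (-5)) (f (-4)) (f (-1)) (f 2) (f 4) * br (f (-5)) (f (-1)) (f 1) (f 2) (f 4) < 0" using h57 by (simp add: sw)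
  have h58: "br (f (-5)) (f (-1)) (f 2) (f 4) (f (-4)) * br (f (-5)) (f (-1)) (f 2) (f 4) (f 3) > 0"
    by (rule facet_br[OF sp bij iso fc11]) (simp_all add: V)
  have pf58: "br (f (-5)) (f (-4)) (f (-1)) (f 2) (f 4) * br (f (-5)) (f (-1)) (f 2) (f 3) (f 4) > 0" using h58 by (simp add: sw)
  have h59: "br (f (-5)) (f (-1)) (f 2) (f 4) (f (-4)) * br (f (-5)) (f (-1)) (f 2) (f 4) (f 5) > 0"
    by (rule facet_br[OF sp bij iso fc11]) (simp_all add: V)
  have pf59: "br (f (-5)) (f (-4)) (f (-1)) (f 2) (f 4) * br (f (-5)) (f (-1)) (f 2) (f 4) (f 5) < 0" using h59 by (simp add: sw)
  have h60: "br (f (-5)) (f 2) (f 3) (f 4) (f (-4)) * br (f (-5)) (f 2) (f 3) (f 4) (f (-3)) > 0"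
    by (rule facet_br[OF sp bij iso fc12]) (simp_all add: V)
  have pf60: "br (f (-5)) (f (-4)) (f 2) (f 3) (f 4) * br (f (-5)) (f (-3)) (f 2) (f 3) (f 4) > 0" using h60 by (simp add: sw)
  have h61: "br (f (-5)) (f 2) (f 3) (f 4) (f (-4)) * br (f (-5)) (f 2) (f 3) (f 4) (f (-2)) > 0"
    by (rule facet_br[OF sp bij iso fc12]) (simp_all add: V)
  have pf61: "br (f (-5)) (f (-4)) (f 2) (f 3) (f 4) * br (f (-5)) (f (-2)) (f 2) (f 3) (f 4) > 0" using h61 by (simp add: sw)
  have h62: "br (f (-5)) (f 2) (f 3) (f 4) (f (-4)) * br (f (-5)) (f 2) (f 3) (f 4) (f (-1)) > 0"
    by (rule facet_br[OF sp bij iso fc12]) (simp_all add: V)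
  have pf62: "br (f (-5)) (f (-4)) (f 2) (f 3) (f 4) * br (f (-5)) (f (-1)) (f 2) (f 3) (f 4) > 0" using h62 by (simp add: sw)
  have h63: "br (f (-5)) (f 2) (f 3) (f 4) (f (-4)) * br (f (-5)) (f 2) (f 3) (f 4) (f 1) > 0"
    by (rule facet_br[OF sp bij iso fc12]) (simp_all add: V)
  have pf63: "br (f (-5)) (f (-4)) (f 2) (f 3) (f 4) * br (f (-5)) (f 1) (f 2) (f 3) (f 4) > 0" using h63 by (simp add: sw)
  have h64: "br (f (-5)) (f 2) (f 3) (f 4) (f (-4)) * br (f (-5)) (f 2) (f 3) (f 4) (f 5) > 0"
    by (rule facet_br[OF sp bij iso fc12]) (simp_all add: V)
  have pf64: "br (f (-5)) (f (-4)) (f 2) (f 3) (f 4) * br (f (-5)) (f 2) (f 3) (f 4) (f 5) < 0" using h64 by (simp add: sw)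
  have h65: "br (f (-4)) (f (-2)) (f (-1)) (f 3) (f (-5)) * br (f (-4)) (f (-2)) (f (-1)) (f 3) (f (-3)) > 0"
    by (rule facet_br[OF sp bij iso fc13]) (simp_all add: V)
  have pf65: "br (f (-5)) (f (-4)) (f (-2)) (f (-1)) (f 3) * br (f (-4)) (f (-3)) (f (-2)) (f (-1)) (f 3) < 0" using h65 by (simp add: sw)
  have h66: "br (f (-4)) (f (-2)) (f (-1)) (f 3) (f (-5)) * br (f (-4)) (f (-2)) (f (-1)) (f 3) (f 1) > 0"
    by (rule facet_br[OF sp bij iso fc13]) (simp_all add: V)
  have pf66: "br (f (-5)) (f (-4)) (f (-2)) (f (-1)) (f 3) * br (f (-4)) (f (-2)) (f (-1)) (f 1) (f 3) < 0" using h66 by (simp add: sw)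
  have h67: "br (f (-4)) (f (-2)) (f (-1)) (f 3) (f (-5)) * br (f (-4)) (f (-2)) (f (-1)) (f 3) (f 2) > 0"
    by (rule facet_br[OF sp bij iso fc13]) (simp_all add: V)
  have pf67: "br (f (-5)) (f (-4)) (f (-2)) (f (-1)) (f 3) * br (f (-4)) (f (-2)) (f (-1)) (f 2) (f 3) < 0" using h67 by (simp add: sw)
  have h68: "br (f (-4)) (f (-2)) (f (-1)) (f 3) (f (-5)) * br (f (-4)) (f (-2)) (f (-1)) (f 3) (f 4) > 0"
    by (rule facet_br[OF sp bij iso fc13]) (simp_all add: V)
  have pf68: "br (f (-5)) (f (-4)) (f (-2)) (f (-1)) (f 3) * br (f (-4)) (f (-2)) (f (-1)) (f 3) (f 4) > 0" using h68 by (simp add: sw)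
  have h69: "br (f (-4)) (f (-2)) (f (-1)) (f 3) (f (-5)) * br (f (-4)) (f (-2)) (f (-1)) (f 3) (f 5) > 0"
    by (rule facet_br[OF sp bij iso fc13]) (simp_all add: V)
  have pf69: "br (f (-5)) (f (-4)) (f (-2)) (f (-1)) (f 3) * br (f (-4)) (f (-2)) (f (-1)) (f 3) (f 5) > 0" using h69 by (simp add: sw)
  have h70: "br (f (-3)) (f (-2)) (f (-1)) (f 4) (f (-5)) * br (f (-3)) (f (-2)) (f (-1)) (f 4) (f (-4)) > 0"
    by (rule facet_br[OF sp bij iso fc14]) (simp_all add: V)
  have pf70: "br (f (-5)) (f (-3)) (f (-2)) (f (-1)) (f 4) * br (f (-4)) (f (-3)) (f (-2)) (f (-1)) (f 4) > 0" using h70 by (simp add: sw)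
  have h71: "br (f (-3)) (f (-2)) (f (-1)) (f 4) (f (-5)) * br (f (-3)) (f (-2)) (f (-1)) (f 4) (f 1) > 0"
    by (rule facet_br[OF sp bij iso fc14]) (simp_all add: V)
  have pf71: "br (f (-5)) (f (-3)) (f (-2)) (f (-1)) (f 4) * br (f (-3)) (f (-2)) (f (-1)) (f 1) (f 4) < 0" using h71 by (simp add: sw)
  have h72: "br (f (-3)) (f (-2)) (f (-1)) (f 4) (f (-5)) * br (f (-3)) (f (-2)) (f (-1)) (f 4) (f 2) > 0"
    by (rule facet_br[OF sp bij iso fc14]) (simp_all add: V)
  have pf72: "br (f (-5)) (f (-3)) (f (-2)) (f (-1)) (f 4) * br (f (-3)) (f (-2)) (f (-1)) (f 2) (f 4) < 0" using h72 by (simp add: sw)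
  have h73: "br (f (-3)) (f (-2)) (f (-1)) (f 4) (f (-5)) * br (f (-3)) (f (-2)) (f (-1)) (f 4) (f 3) > 0"
    by (rule facet_br[OF sp bij iso fc14]) (simp_all add: V)
  have pf73: "br (f (-5)) (f (-3)) (f (-2)) (f (-1)) (f 4) * br (f (-3)) (f (-2)) (f (-1)) (f 3) (f 4) < 0" using h73 by (simp add: sw)
  have h74: "br (f (-3)) (f (-2)) (f (-1)) (f 4) (f (-5)) * br (f (-3)) (f (-2)) (f (-1)) (f 4) (f 5) > 0"
    by (rule facet_br[OF sp bij iso fc14]) (simp_all add: V)
  have pf74: "br (f (-5)) (f (-3)) (f (-2)) (f (-1)) (f 4) * br (f (-3)) (f (-2)) (f (-1)) (f 4) (f 5) > 0" using h74 by (simp add: sw)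
  have h75: "br (f (-3)) (f (-1)) (f 2) (f 4) (f (-5)) * br (f (-3)) (f (-1)) (f 2) (f 4) (f (-4)) > 0"
    by (rule facet_br[OF sp bij iso fc15]) (simp_all add: V)
  have pf75: "br (f (-5)) (f (-3)) (f (-1)) (f 2) (f 4) * br (f (-4)) (f (-3)) (f (-1)) (f 2) (f 4) > 0" using h75 by (simp add: sw)
  have h76: "br (f (-3)) (f (-1)) (f 2) (f 4) (f (-5)) * br (f (-3)) (f (-1)) (f 2) (f 4) (f (-2)) > 0"
    by (rule facet_br[OF sp bij iso fc15]) (simp_all add: V)
  have pf76: "br (f (-5)) (f (-3)) (f (-1)) (f 2) (f 4) * br (f (-3)) (f (-2)) (f (-1)) (f 2) (f 4) < 0" using h76 by (simp add: sw)
  have h77: "br (f (-3)) (f (-1)) (f 2) (f 4) (f (-5)) * br (f (-3)) (f (-1)) (f 2) (f 4) (f 1) > 0"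
    by (rule facet_br[OF sp bij iso fc15]) (simp_all add: V)
  have pf77: "br (f (-5)) (f (-3)) (f (-1)) (f 2) (f 4) * br (f (-3)) (f (-1)) (f 1) (f 2) (f 4) > 0" using h77 by (simp add: sw)
  have h78: "br (f (-3)) (f (-1)) (f 2) (f 4) (f (-5)) * br (f (-3)) (f (-1)) (f 2) (f 4) (f 3) > 0"
    by (rule facet_br[OF sp bij iso fc15]) (simp_all add: V)
  have pf78: "br (f (-5)) (f (-3)) (f (-1)) (f 2) (f 4) * br (f (-3)) (f (-1)) (f 2) (f 3) (f 4) < 0" using h78 by (simp add: sw)
  have h79: "br (f (-3)) (f (-1)) (f 2) (f 4) (f (-5)) * br (f (-3)) (f (-1)) (f 2) (f 4) (f 5) > 0"
    by (rule facet_br[OF sp bij iso fc15]) (simp_all add: V)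
  have pf79: "br (f (-5)) (f (-3)) (f (-1)) (f 2) (f 4) * br (f (-3)) (f (-1)) (f 2) (f 4) (f 5) > 0" using h79 by (simp add: sw)
  have gp0: "br (f (-5)) (f (-4)) (f (-3)) (f (-2)) (f (-1)) * br (f (-5)) (f (-2)) (f (-1)) (f 3) (f 5) - br (f (-5)) (f (-4)) (f (-2)) (f (-1)) (f 3) * br (f (-5)) (f (-3)) (f (-2)) (f (-1)) (f 5) + br (f (-5)) (f (-4)) (f (-2)) (f (-1)) (f 5) * br (f (-5)) (f (-3)) (f (-2)) (f (-1)) (f 3) = 0"
    using br_gp[of "f (-5)" "f (-2)" "f (-1)" "f (-4)" "f (-3)" "f 3" "f 5"] by (simp add: sw)
  have gp1: "br (f (-5)) (f (-4)) (f (-3)) (f 1) (f 2) * br (f (-5)) (f 1) (f 2) (f 3) (f 4) - br (f (-5)) (f (-4)) (f 1) (f 2) (f 3) * br (f (-5)) (f (-3)) (f 1) (f 2) (f 4) + br (f (-5)) (f (-4)) (f 1) (f 2) (f 4) * br (f (-5)) (f (-3)) (f 1) (f 2) (f 3) = 0"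
    using br_gp[of "f (-5)" "f 1" "f 2" "f (-4)" "f (-3)" "f 3" "f 4"] by (simp add: sw)
  have gp2: "br (f (-5)) (f (-4)) (f (-3)) (f 1) (f 2) * br (f (-5)) (f 1) (f 2) (f 3) (f 5) - br (f (-5)) (f (-4)) (f 1) (f 2) (f 3) * br (f (-5)) (f (-3)) (f 1) (f 2) (f 5) + br (f (-5)) (f (-4)) (f 1) (f 2) (f 5) * br (f (-5)) (f (-3)) (f 1) (f 2) (f 3) = 0"
    using br_gp[of "f (-5)" "f 1" "f 2" "f (-4)" "f (-3)" "f 3" "f 5"] by (simp add: sw)
  have gp3: "br (f (-5)) (f (-3)) (f (-1)) (f 1) (f 2) * br (f (-5)) (f 1) (f 2) (f 3) (f 4) - br (f (-5)) (f (-3)) (f 1) (f 2) (f 3) * br (f (-5)) (f (-1)) (f 1) (f 2) (f 4) + br (f (-5)) (f (-3)) (f 1) (f 2) (f 4) * br (f (-5)) (f (-1)) (f 1) (f 2) (f 3) = 0"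
    using br_gp[of "f (-5)" "f 1" "f 2" "f (-3)" "f (-1)" "f 3" "f 4"] by (simp add: sw)
  have gp4: "br (f (-5)) (f (-4)) (f (-1)) (f 2) (f 3) * br (f (-5)) (f 1) (f 2) (f 3) (f 4) - br (f (-5)) (f (-4)) (f 1) (f 2) (f 3) * br (f (-5)) (f (-1)) (f 2) (f 3) (f 4) + br (f (-5)) (f (-4)) (f 2) (f 3) (f 4) * br (f (-5)) (f (-1)) (f 1) (f 2) (f 3) = 0"
    using br_gp[of "f (-5)" "f 2" "f 3" "f (-4)" "f (-1)" "f 1" "f 4"] by (simp add: sw)
  have gp5: "br (f (-5)) (f (-4)) (f (-3)) (f 2) (f 4) * br (f (-5)) (f (-1)) (f 1) (f 2) (f 4) - br (f (-5)) (f (-4)) (f (-1)) (f 2) (f 4) * br (f (-5)) (f (-3)) (f 1) (f 2) (f 4) + br (f (-5)) (f (-4)) (f 1) (f 2) (f 4) * br (f (-5)) (f (-3)) (f (-1)) (f 2) (f 4) = 0"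
    using br_gp[of "f (-5)" "f 2" "f 4" "f (-4)" "f (-3)" "f (-1)" "f 1"] by (simp add: sw)
  have gp6: "- br (f (-5)) (f (-4)) (f (-3)) (f (-2)) (f (-1)) * br (f (-4)) (f (-3)) (f (-2)) (f 3) (f 5) + br (f (-5)) (f (-4)) (f (-3)) (f (-2)) (f 3) * br (f (-4)) (f (-3)) (f (-2)) (f (-1)) (f 5) - br (f (-5)) (f (-4)) (f (-3)) (f (-2)) (f 5) * br (f (-4)) (f (-3)) (f (-2)) (f (-1)) (f 3) = 0"
    using br_gp[of "f (-4)" "f (-3)" "f (-2)" "f (-5)" "f (-1)" "f 3" "f 5"] by (simp add: sw)
  have gp7: "- br (f (-5)) (f (-4)) (f (-3)) (f (-2)) (f 1) * br (f (-4)) (f (-3)) (f (-2)) (f 3) (f 5) + br (f (-5)) (f (-4)) (f (-3)) (f (-2)) (f 3) * br (f (-4)) (f (-3)) (f (-2)) (f 1) (f 5) - br (f (-5)) (f (-4)) (f (-3)) (f (-2)) (f 5) * br (f (-4)) (f (-3)) (f (-2)) (f 1) (f 3) = 0"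
    using br_gp[of "f (-4)" "f (-3)" "f (-2)" "f (-5)" "f 1" "f 3" "f 5"] by (simp add: sw)
  have gp8: "br (f (-4)) (f (-3)) (f (-2)) (f (-1)) (f 1) * br (f (-4)) (f (-3)) (f (-2)) (f 3) (f 5) - br (f (-4)) (f (-3)) (f (-2)) (f (-1)) (f 3) * br (f (-4)) (f (-3)) (f (-2)) (f 1) (f 5) + br (f (-4)) (f (-3)) (f (-2)) (f (-1)) (f 5) * br (f (-4)) (f (-3)) (f (-2)) (f 1) (f 3) = 0"
    using br_gp[of "f (-4)" "f (-3)" "f (-2)" "f (-1)" "f 1" "f 3" "f 5"] by (simp add: sw)
  have gp9: "- br (f (-5)) (f (-4)) (f (-3)) (f (-2)) (f (-1)) * br (f (-4)) (f (-2)) (f (-1)) (f 1) (f 3) + br (f (-5)) (f (-4)) (f (-2)) (f (-1)) (f 1) * br (f (-4)) (f (-3)) (f (-2)) (f (-1)) (f 3) - br (f (-5)) (f (-4)) (f (-2)) (f (-1)) (f 3) * br (f (-4)) (f (-3)) (f (-2)) (f (-1)) (f 1) = 0"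
    using br_gp[of "f (-4)" "f (-2)" "f (-1)" "f (-5)" "f (-3)" "f 1" "f 3"] by (simp add: sw)
  have gp10: "- br (f (-5)) (f (-4)) (f (-3)) (f (-2)) (f (-1)) * br (f (-4)) (f (-2)) (f (-1)) (f 3) (f 4) + br (f (-5)) (f (-4)) (f (-2)) (f (-1)) (f 3) * br (f (-4)) (f (-3)) (f (-2)) (f (-1)) (f 4) - br (f (-5)) (f (-4)) (f (-2)) (f (-1)) (f 4) * br (f (-4)) (f (-3)) (f (-2)) (f (-1)) (f 3) = 0"
    using br_gp[of "f (-4)" "f (-2)" "f (-1)" "f (-5)" "f (-3)" "f 3" "f 4"] by (simp add: sw)
  have gp11: "- br (f (-5)) (f (-4)) (f (-2)) (f 1) (f 2) * br (f (-4)) (f 1) (f 2) (f 3) (f 5) + br (f (-5)) (f (-4)) (f 1) (f 2) (f 3) * br (f (-4)) (f (-2)) (f 1) (f 2) (f 5) - br (f (-5)) (f (-4)) (f 1) (f 2) (f 5) * br (f (-4)) (f (-2)) (f 1) (f 2) (f 3) = 0"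
    using br_gp[of "f (-4)" "f 1" "f 2" "f (-5)" "f (-2)" "f 3" "f 5"] by (simp add: sw)
  have gp12: "- br (f (-5)) (f (-4)) (f (-2)) (f 2) (f 3) * br (f (-4)) (f (-1)) (f 1) (f 2) (f 3) + br (f (-5)) (f (-4)) (f (-1)) (f 2) (f 3) * br (f (-4)) (f (-2)) (f 1) (f 2) (f 3) - br (f (-5)) (f (-4)) (f 1) (f 2) (f 3) * br (f (-4)) (f (-2)) (f (-1)) (f 2) (f 3) = 0"
    using br_gp[of "f (-4)" "f 2" "f 3" "f (-5)" "f (-2)" "f (-1)" "f 1"] by (simp add: sw)
  have gp13: "br (f (-4)) (f (-3)) (f (-2)) (f (-1)) (f 5) * br (f (-3)) (f (-2)) (f 1) (f 3) (f 5) - br (f (-4)) (f (-3)) (f (-2)) (f 1) (f 5) * br (f (-3)) (f (-2)) (f (-1)) (f 3) (f 5) + br (f (-4)) (f (-3)) (f (-2)) (f 3) (f 5) * br (f (-3)) (f (-2)) (f (-1)) (f 1) (f 5) = 0"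
    using br_gp[of "f (-3)" "f (-2)" "f 5" "f (-4)" "f (-1)" "f 1" "f 3"] by (simp add: sw)
  have gp14: "- br (f (-5)) (f (-4)) (f (-2)) (f (-1)) (f 1) * br (f (-3)) (f (-2)) (f (-1)) (f 1) (f 5) + br (f (-5)) (f (-3)) (f (-2)) (f (-1)) (f 1) * br (f (-4)) (f (-2)) (f (-1)) (f 1) (f 5) - br (f (-5)) (f (-2)) (f (-1)) (f 1) (f 5) * br (f (-4)) (f (-3)) (f (-2)) (f (-1)) (f 1) = 0"
    using br_gp[of "f (-2)" "f (-1)" "f 1" "f (-5)" "f (-4)" "f (-3)" "f 5"] by (simp add: sw)
  have gp15: "- br (f (-5)) (f (-4)) (f (-2)) (f (-1)) (f 3) * br (f (-3)) (f (-2)) (f (-1)) (f 3) (f 4) + br (f (-5)) (f (-3)) (f (-2)) (f (-1)) (f 3) * br (f (-4)) (f (-2)) (f (-1)) (f 3) (f 4) - br (f (-5)) (f (-2)) (f (-1)) (f 3) (f 4) * br (f (-4)) (f (-3)) (f (-2)) (f (-1)) (f 3) = 0"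
    using br_gp[of "f (-2)" "f (-1)" "f 3" "f (-5)" "f (-4)" "f (-3)" "f 4"] by (simp add: sw)
  have gp16: "- br (f (-5)) (f (-3)) (f (-2)) (f (-1)) (f 4) * br (f (-2)) (f (-1)) (f 3) (f 4) (f 5) + br (f (-5)) (f (-2)) (f (-1)) (f 3) (f 4) * br (f (-3)) (f (-2)) (f (-1)) (f 4) (f 5) - br (f (-5)) (f (-2)) (f (-1)) (f 4) (f 5) * br (f (-3)) (f (-2)) (f (-1)) (f 3) (f 4) = 0"
    using br_gp[of "f (-2)" "f (-1)" "f 4" "f (-5)" "f (-3)" "f 3" "f 5"] by (simp add: sw)
  have gp17: "- br (f (-5)) (f (-3)) (f 1) (f 2) (f 4) * br (f 1) (f 2) (f 3) (f 4) (f 5) + br (f (-5)) (f 1) (f 2) (f 3) (f 4) * br (f (-3)) (f 1) (f 2) (f 4) (f 5) - br (f (-5)) (f 1) (f 2) (f 4) (f 5) * br (f (-3)) (f 1) (f 2) (f 3) (f 4) = 0"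
    using br_gp[of "f 1" "f 2" "f 4" "f (-5)" "f (-3)" "f 3" "f 5"] by (simp add: sw)
  have gp18: "br (f (-5)) (f (-4)) (f 1) (f 2) (f 5) * br (f (-2)) (f 1) (f 2) (f 3) (f 5) - br (f (-5)) (f (-2)) (f 1) (f 2) (f 5) * br (f (-4)) (f 1) (f 2) (f 3) (f 5) + br (f (-5)) (f 1) (f 2) (f 3) (f 5) * br (f (-4)) (f (-2)) (f 1) (f 2) (f 5) = 0"
    using br_gp[of "f 1" "f 2" "f 5" "f (-5)" "f (-4)" "f (-2)" "f 3"] by (simp add: sw)
  have gp19: "- br (f (-5)) (f (-4)) (f (-3)) (f (-2)) (f 1) * br (f (-5)) (f (-4)) (f (-2)) (f 2) (f 3) + br (f (-5)) (f (-4)) (f (-3)) (f (-2)) (f 2) * br (f (-5)) (f (-4)) (f (-2)) (f 1) (f 3) - br (f (-5)) (f (-4)) (f (-3)) (f (-2)) (f 3) * br (f (-5)) (f (-4)) (f (-2)) (f 1) (f 2) = 0"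
    using br_gp[of "f (-5)" "f (-4)" "f (-2)" "f (-3)" "f 1" "f 2" "f 3"] by (simp add: sw)
  have gp20: "br (f (-5)) (f (-4)) (f (-2)) (f (-1)) (f 1) * br (f (-5)) (f (-4)) (f (-2)) (f 2) (f 3) - br (f (-5)) (f (-4)) (f (-2)) (f (-1)) (f 2) * br (f (-5)) (f (-4)) (f (-2)) (f 1) (f 3) + br (f (-5)) (f (-4)) (f (-2)) (f (-1)) (f 3) * br (f (-5)) (f (-4)) (f (-2)) (f 1) (f 2) = 0"
    using br_gp[of "f (-5)" "f (-4)" "f (-2)" "f (-1)" "f 1" "f 2" "f 3"] by (simp add: sw)
  have gp21: "- br (f (-5)) (f (-4)) (f (-3)) (f (-2)) (f 2) * br (f (-5)) (f (-4)) (f (-1)) (f 2) (f 4) + br (f (-5)) (f (-4)) (f (-3)) (f (-1)) (f 2) * br (f (-5)) (f (-4)) (f (-2)) (f 2) (f 4) - br (f (-5)) (f (-4)) (f (-3)) (f 2) (f 4) * br (f (-5)) (f (-4)) (f (-2)) (f (-1)) (f 2) = 0"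
    using br_gp[of "f (-5)" "f (-4)" "f 2" "f (-3)" "f (-2)" "f (-1)" "f 4"] by (simp add: sw)
  have gp22: "br (f (-5)) (f (-4)) (f (-2)) (f (-1)) (f 1) * br (f (-5)) (f (-2)) (f (-1)) (f 4) (f 5) - br (f (-5)) (f (-4)) (f (-2)) (f (-1)) (f 4) * br (f (-5)) (f (-2)) (f (-1)) (f 1) (f 5) + br (f (-5)) (f (-4)) (f (-2)) (f (-1)) (f 5) * br (f (-5)) (f (-2)) (f (-1)) (f 1) (f 4) = 0"
    using br_gp[of "f (-5)" "f (-2)" "f (-1)" "f (-4)" "f 1" "f 4" "f 5"] by (simp add: sw)
  have gp23: "br (f (-5)) (f (-3)) (f (-2)) (f (-1)) (f 1) * br (f (-5)) (f (-2)) (f (-1)) (f 2) (f 4) - br (f (-5)) (f (-3)) (f (-2)) (f (-1)) (f 2) * br (f (-5)) (f (-2)) (f (-1)) (f 1) (f 4) + br (f (-5)) (f (-3)) (f (-2)) (f (-1)) (f 4) * br (f (-5)) (f (-2)) (f (-1)) (f 1) (f 2) = 0"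
    using br_gp[of "f (-5)" "f (-2)" "f (-1)" "f (-3)" "f 1" "f 2" "f 4"] by (simp add: sw)
  have gp24: "br (f (-5)) (f (-4)) (f (-2)) (f (-1)) (f 2) * br (f (-5)) (f (-2)) (f 1) (f 2) (f 4) - br (f (-5)) (f (-4)) (f (-2)) (f 1) (f 2) * br (f (-5)) (f (-2)) (f (-1)) (f 2) (f 4) + br (f (-5)) (f (-4)) (f (-2)) (f 2) (f 4) * br (f (-5)) (f (-2)) (f (-1)) (f 1) (f 2) = 0"
    using br_gp[of "f (-5)" "f (-2)" "f 2" "f (-4)" "f (-1)" "f 1" "f 4"] by (simp add: sw)
  have gp25: "br (f (-5)) (f (-4)) (f (-2)) (f 1) (f 2) * br (f (-5)) (f 1) (f 2) (f 4) (f 5) - br (f (-5)) (f (-4)) (f 1) (f 2) (f 4) * br (f (-5)) (f (-2)) (f 1) (f 2) (f 5) + br (f (-5)) (f (-4)) (f 1) (f 2) (f 5) * br (f (-5)) (f (-2)) (f 1) (f 2) (f 4) = 0"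
    using br_gp[of "f (-5)" "f 1" "f 2" "f (-4)" "f (-2)" "f 4" "f 5"] by (simp add: sw)
  have gp26: "- br (f (-5)) (f (-4)) (f (-3)) (f (-2)) (f (-1)) * br (f (-4)) (f (-2)) (f (-1)) (f 1) (f 5) + br (f (-5)) (f (-4)) (f (-2)) (f (-1)) (f 1) * br (f (-4)) (f (-3)) (f (-2)) (f (-1)) (f 5) - br (f (-5)) (f (-4)) (f (-2)) (f (-1)) (f 5) * br (f (-4)) (f (-3)) (f (-2)) (f (-1)) (f 1) = 0"
    using br_gp[of "f (-4)" "f (-2)" "f (-1)" "f (-5)" "f (-3)" "f 1" "f 5"] by (simp add: sw)
  have gp27: "- br (f (-5)) (f (-4)) (f (-2)) (f (-1)) (f 1) * br (f (-4)) (f (-2)) (f (-1)) (f 3) (f 4) + br (f (-5)) (f (-4)) (f (-2)) (f (-1)) (f 3) * br (f (-4)) (f (-2)) (f (-1)) (f 1) (f 4) - br (f (-5)) (f (-4)) (f (-2)) (f (-1)) (f 4) * br (f (-4)) (f (-2)) (f (-1)) (f 1) (f 3) = 0"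
    using br_gp[of "f (-4)" "f (-2)" "f (-1)" "f (-5)" "f 1" "f 3" "f 4"] by (simp add: sw)
  have gp28: "- br (f (-5)) (f (-4)) (f (-3)) (f 1) (f 2) * br (f (-4)) (f 1) (f 2) (f 3) (f 4) + br (f (-5)) (f (-4)) (f 1) (f 2) (f 3) * br (f (-4)) (f (-3)) (f 1) (f 2) (f 4) - br (f (-5)) (f (-4)) (f 1) (f 2) (f 4) * br (f (-4)) (f (-3)) (f 1) (f 2) (f 3) = 0"
    using br_gp[of "f (-4)" "f 1" "f 2" "f (-5)" "f (-3)" "f 3" "f 4"] by (simp add: sw)
  have gp29: "- br (f (-5)) (f (-4)) (f (-3)) (f 1) (f 2) * br (f (-4)) (f 1) (f 2) (f 3) (f 5) + br (f (-5)) (f (-4)) (f 1) (f 2) (f 3) * br (f (-4)) (f (-3)) (f 1) (f 2) (f 5) - br (f (-5)) (f (-4)) (f 1) (f 2) (f 5) * br (f (-4)) (f (-3)) (f 1) (f 2) (f 3) = 0"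
    using br_gp[of "f (-4)" "f 1" "f 2" "f (-5)" "f (-3)" "f 3" "f 5"] by (simp add: sw)
  have gp30: "- br (f (-5)) (f (-4)) (f 1) (f 2) (f 3) * br (f (-4)) (f 1) (f 2) (f 4) (f 5) + br (f (-5)) (f (-4)) (f 1) (f 2) (f 4) * br (f (-4)) (f 1) (f 2) (f 3) (f 5) - br (f (-5)) (f (-4)) (f 1) (f 2) (f 5) * br (f (-4)) (f 1) (f 2) (f 3) (f 4) = 0"
    using br_gp[of "f (-4)" "f 1" "f 2" "f (-5)" "f 3" "f 4" "f 5"] by (simp add: sw)
  have gp31: "br (f (-4)) (f (-3)) (f (-2)) (f 1) (f 2) * br (f (-4)) (f 1) (f 2) (f 3) (f 5) - br (f (-4)) (f (-3)) (f 1) (f 2) (f 3) * br (f (-4)) (f (-2)) (f 1) (f 2) (f 5) + br (f (-4)) (f (-3)) (f 1) (f 2) (f 5) * br (f (-4)) (f (-2)) (f 1) (f 2) (f 3) = 0"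
    using br_gp[of "f (-4)" "f 1" "f 2" "f (-3)" "f (-2)" "f 3" "f 5"] by (simp add: sw)
  have gp32: "br (f (-4)) (f (-2)) (f 1) (f 2) (f 3) * br (f (-4)) (f 1) (f 2) (f 4) (f 5) - br (f (-4)) (f (-2)) (f 1) (f 2) (f 4) * br (f (-4)) (f 1) (f 2) (f 3) (f 5) + br (f (-4)) (f (-2)) (f 1) (f 2) (f 5) * br (f (-4)) (f 1) (f 2) (f 3) (f 4) = 0"
    using br_gp[of "f (-4)" "f 1" "f 2" "f (-2)" "f 3" "f 4" "f 5"] by (simp add: sw)
  have gp33: "- br (f (-5)) (f (-4)) (f (-2)) (f (-1)) (f 1) * br (f (-3)) (f (-2)) (f (-1)) (f 1) (f 4) + br (f (-5)) (f (-3)) (f (-2)) (f (-1)) (f 1) * br (f (-4)) (f (-2)) (f (-1)) (f 1) (f 4) - br (f (-5)) (f (-2)) (f (-1)) (f 1) (f 4) * br (f (-4)) (f (-3)) (f (-2)) (f (-1)) (f 1) = 0"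
    using br_gp[of "f (-2)" "f (-1)" "f 1" "f (-5)" "f (-4)" "f (-3)" "f 4"] by (simp add: sw)
  have gp34: "br (f (-5)) (f (-4)) (f (-2)) (f (-1)) (f 4) * br (f (-3)) (f (-2)) (f (-1)) (f 2) (f 4) - br (f (-5)) (f (-3)) (f (-2)) (f (-1)) (f 4) * br (f (-4)) (f (-2)) (f (-1)) (f 2) (f 4) + br (f (-5)) (f (-2)) (f (-1)) (f 2) (f 4) * br (f (-4)) (f (-3)) (f (-2)) (f (-1)) (f 4) = 0"
    using br_gp[of "f (-2)" "f (-1)" "f 4" "f (-5)" "f (-4)" "f (-3)" "f 2"] by (simp add: sw)
  have gp35: "br (f (-5)) (f (-4)) (f (-2)) (f (-1)) (f 4) * br (f (-2)) (f (-1)) (f 1) (f 2) (f 4) - br (f (-5)) (f (-2)) (f (-1)) (f 1) (f 4) * br (f (-4)) (f (-2)) (f (-1)) (f 2) (f 4) + br (f (-5)) (f (-2)) (f (-1)) (f 2) (f 4) * br (f (-4)) (f (-2)) (f (-1)) (f 1) (f 4) = 0"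
    using br_gp[of "f (-2)" "f (-1)" "f 4" "f (-5)" "f (-4)" "f 1" "f 2"] by (simp add: sw)
  have gp36: "- br (f (-5)) (f (-4)) (f (-2)) (f 1) (f 2) * br (f (-3)) (f (-2)) (f 1) (f 2) (f 4) + br (f (-5)) (f (-3)) (f (-2)) (f 1) (f 2) * br (f (-4)) (f (-2)) (f 1) (f 2) (f 4) - br (f (-5)) (f (-2)) (f 1) (f 2) (f 4) * br (f (-4)) (f (-3)) (f (-2)) (f 1) (f 2) = 0"
    using br_gp[of "f (-2)" "f 1" "f 2" "f (-5)" "f (-4)" "f (-3)" "f 4"] by (simp add: sw)
  have gp37: "br (f (-5)) (f (-4)) (f 1) (f 2) (f 4) * br (f (-3)) (f (-1)) (f 1) (f 2) (f 4) - br (f (-5)) (f (-3)) (f 1) (f 2) (f 4) * br (f (-4)) (f (-1)) (f 1) (f 2) (f 4) + br (f (-5)) (f (-1)) (f 1) (f 2) (f 4) * br (f (-4)) (f (-3)) (f 1) (f 2) (f 4) = 0"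
    using br_gp[of "f 1" "f 2" "f 4" "f (-5)" "f (-4)" "f (-3)" "f (-1)"] by (simp add: sw)
  have gp38: "br (f (-5)) (f (-4)) (f 1) (f 2) (f 4) * br (f (-2)) (f (-1)) (f 1) (f 2) (f 4) - br (f (-5)) (f (-2)) (f 1) (f 2) (f 4) * br (f (-4)) (f (-1)) (f 1) (f 2) (f 4) + br (f (-5)) (f (-1)) (f 1) (f 2) (f 4) * br (f (-4)) (f (-2)) (f 1) (f 2) (f 4) = 0"
    using br_gp[of "f 1" "f 2" "f 4" "f (-5)" "f (-4)" "f (-2)" "f (-1)"] by (simp add: sw)
  show False by (rule core[OF pf0 pf1 pf2 pf3 pf4 pf5 pf6 pf7 pf8 pf9 pf10 pf11 pf12 pf13 pf14 pf15 pf16 pf17 pf18 pf19 pf20 pf21 pf22 pf23 pf24 pf25 pf26 pf27 pf28 pf29 pf30 pf31 pf32 pf33 pf34 pf35 pf36 pf37 pf38 pf39 pf40 pf41 pf42 pf43 pf44 pf45 pf46 pf47 pf48 pf49 pf50 pf51 pf52 pf53 pf54 pf55 pf56 pf57 pf58 pf59 pf60 pf61 pf62 pf63 pf64 pf65 pf66 pf67 pf68 pf69 pf70 pf71 pf72 pf73 pf74 pf75 pf76 pf77 pf78 pf79 gp0 gp1 gp2 gp3 gp4 gp5 gp6 gp7 gp8 gp9 gp10 gp11 gp12 gp13 gp14 gp15 gp16 gp17 gp18 gp19 gp20 gp21 gp22 gp23 gp24 gp25 gp26 gp27 gp28 gp29 gp30 gp31 gp32 gp33 gp34 gp35 gp36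 gp37 gp38])
qed

end
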